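(* Let $G$ be a finite undirected graph with three distinct vertices $u,v,w$ such that $N(u)=\{v,w\}$ and $v,w$ are not adjacent. If $\mathrm{Ind}(G\setminus(N(u)\cup N(v)))$ and $\mathrm{Ind}(G\setminus(N(u)\cup N(w)))$ are $(k-1)$-connected, and $\mathrm{Ind}(G\setminus(N(u)\cup N(v)\cup N(w)))$ is $(k-2)$-connected, then $\mathrm{Ind}(G)$ is $k$-connected.
   Context: $N(x)$ is the set of vertices adjacent to $x$. $\mathrm{Ind}(H)$ is the simplicial complex with vertex set $V(H)$ whose simplices are the independent sets of $H$; $H\setminus W$ is the induced subgraph on $V(H)\setminus W$. A complex is $(-1)$-connected iff nonempty, and every complex is $k$-connected for $k\le-2$. *)

theory Defs
  imports "HOL-Analysis.Analysis"
begin

definition simple_graph :: "'a set \<Rightarrow> ('a \<Rightarrow> 'a \<Rightarrow> bool) \<Rightarrow> bool" where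
  "simple_graph V E \<longleftrightarrow> finite V \<and> (\<forall>x y. E x y \<longrightarrow> x \<in> V \<and> y \<in> V)
     \<and> (\<forall>x y. E x y \<longrightarrow> E y x) \<and> (\<forall>x. \<not> E x x)"

definition nbhd :: "'a set \<Rightarrow> ('a \<Rightarrow> 'a \<Rightarrow> bool) \<Rightarrow> 'a \<Rightarrow> 'a set" where
  "nbhd V E x = {y \<in> V. E x y}"

definition independent :: "('a \<Rightarrow> 'a \<Rightarrow> bool) \<Rightarrow> 'a set \<Rightarrow> bool" where
  "independent E S \<longleftrightarrow> (\<forall>x\<in>S. \<forall>y\<in>S. \<not> E x y)"

text \<open>Ind(G \ W): the simplicial complex (as its set of faces) of independent sets
  of the induced subgraph of G on V - W.\<close>
definition Ind_del :: "'a set \<Rightarrow> ('a \<Rightarrow> 'a \<Rightarrow> bool) \<Rightarrow> 'a set \<Rightarrow> 'a set set" where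
  "Ind_del V E W = {\<sigma>. \<sigma> \<subseteq> V - W \<and> independent E \<sigma>}"

text \<open>Geometric realization of a finite simplicial complex K (given by its faces):
  the convex combinations of vertices spanning a face, as points of 'a => real.\<close>
definition realization :: "'a set set \<Rightarrow> ('a \<Rightarrow> real) set" where
  "realization K = {f. {x. f x \<noteq> 0} \<in> K \<and> (\<forall>x. 0 \<le> f x) \<and> sum f {x. f x \<noteq> 0} = 1}"

definition realization_top :: "'a set set \<Rightarrow> ('a \<Rightarrow> real) topology" where
  "realization_top K = subtopology (powertop_real UNIV) (realization K)"

definition k_connected :: "int \<Rightarrow> 'b topology \<Rightarrow> bool" where
  "k_connected k X \<longleftrightarrow> (k \<ge> -1 \<longrightarrow> topspace X \<noteq> {}) \<and>
     (\<forall>i::nat. int i \<le> k \<longrightarrow> (\<forall>f. continuous_map (nsphere i) X f \<longrightarrow>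
        (\<exists>c. homotopic_with (\<lambda>_. True) (nsphere i) X f (\<lambda>_. c))))"

end

theory Submission
  imports Defs
begin

definition rsupp :: "('b \<Rightarrow> real) \<Rightarrow> 'b set" where
  "rsupp f = {x. f x \<noteq> 0}"

definition dclosed :: "'b set set \<Rightarrow> bool" where
  "dclosed K \<longleftrightarrow> (\<forall>\<tau>\<in>K. \<forall>\<sigma>. \<sigma> \<subseteq> \<tau> \<longrightarrow> \<sigma> \<in> K)"

definition prob :: "('b \<Rightarrow> real) \<Rightarrow> bool" where
  "prob f \<longleftrightarrow> (\<forall>x. 0 \<le> f x) \<and> finite (rsupp f) \<and> sum f (rsupp f) = 1"

lemma realization_iff: "f \<in> realization K \<longleftrightarrow> rsupp f \<in> K \<and> prob f"
proof -
  have "sum f {x. f x \<noteq> 0} = 1 \<Longrightarrow> finite {x. f x \<noteq> 0}"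
    by (metis sum.infinite zero_neq_one)
  then show ?thesis unfolding realization_def prob_def rsupp_def mem_Collect_eq by blast
qed

lemma realization_mono: "K \<subseteq> L \<Longrightarrow> realization K \<subseteq> realization L"
  unfolding realization_def by auto

lemma topspace_realization_top [simp]: "topspace (realization_top K) = realization K"
  unfolding realization_top_def by simp

lemma cm_real:
  "continuous_map T (realization_top K) h \<longleftrightarrow>
    (\<forall>x\<in>topspace T. h x \<in> realization K) \<and> (\<forall>a. continuous_map T euclideanreal (\<lambda>x. h x a))"
  unfolding realization_top_def continuous_map_in_subtopology continuous_map_componentwise_UNIV Pi_iff
  by blast

lemma realization_coord_cont: "continuous_map (realization_top K) euclideanreal (\<lambda>x. x a)"
  unfolding realization_top_def
  by (intro continuous_map_from_subtopology continuous_map_product_projection) auto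

lemma cm_real_coord:
  "continuous_map T euclideanreal (\<lambda>x. h x a)" if "continuous_map T (realization_top K) h"
  using that by (simp add: cm_real)

lemma sum_rsupp_superset:
  assumes "finite S" "rsupp f \<subseteq> S"
  shows "sum f S = sum f (rsupp f)"
  using assms by (intro sum.mono_neutral_right) (auto simp: rsupp_def)

lemma prob_comb:
  assumes f: "prob f" and g: "prob g" and t: "0 \<le> t" "t \<le> 1"
  shows "prob (\<lambda>a. (1 - t) * f a + t * g a)" 
    and "rsupp (\<lambda>a. (1 - t) * f a + t * g a) \<subseteq> rsupp f \<union> rsupp g"
proof -
  let ?h = "\<lambda>a. (1 - t) * f a + t * g a"
  let ?S = "rsupp f \<union> rsupp g"
  show sub: "rsupp ?h \<subseteq> ?S" by (auto simp: rsupp_def)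
  have fin: "finite ?S" using f g by (auto simp: prob_def)
  have nn: "\<forall>x. 0 \<le> ?h x" using f g t by (auto simp: prob_def)
  have "sum ?h (rsupp ?h) = sum ?h ?S" using sum_rsupp_superset[OF fin sub] by simp
  also have "\<dots> = (1 - t) * sum f ?S + t * sum g ?S"
    by (simp add: sum.distrib sum_distrib_left)
  also have "sum f ?S = 1" using f fin by (subst sum_rsupp_superset) (auto simp: prob_def)
  also have "sum g ?S = 1" using g fin by (subst sum_rsupp_superset) (auto simp: prob_def)
  finally have s1: "sum ?h (rsupp ?h) = 1" by simp
  show "prob ?h" unfolding prob_def using nn s1 finite_subset[OF sub fin] by blast
qed

lemma comb_in_realization:
  assumes "dclosed K" "rsupp f \<union> rsupp g \<in> K" "prob f" "prob g" "0 \<le> t" "t \<le> 1"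
  shows "(\<lambda>a. (1 - t) * f a + t * g a) \<in> realization K"
proof -
  have "rsupp (\<lambda>a. (1 - t) * f a + t * g a) \<in> K"
    using prob_comb(2)[OF assms(3-6)] assms(1,2) unfolding dclosed_def by blast
  then show ?thesis using prob_comb(1)[OF assms(3-6)] by (simp add: realization_iff)
qed

lemma straight_homotopic:
  assumes dc: "dclosed K"
    and f: "continuous_map T (realization_top K) f"
    and g: "continuous_map T (realization_top K) g"
    and un: "\<And>x. x \<in> topspace T \<Longrightarrow> rsupp (f x) \<union> rsupp (g x) \<in> K"
  shows "homotopic_with (\<lambda>_. True) T (realization_top K) f g"
  unfolding homotopic_with_def
proof (intro exI conjI allI ballI)
  let ?h = "\<lambda>(t::real, x). (\<lambda>a. (1 - t) * f x a + t * g x a)"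
  show "continuous_map (prod_topology (top_of_set {0..1}) T) (realization_top K) ?h"
    unfolding cm_real
  proof (intro conjI ballI allI)
    fix p assume "p \<in> topspace (prod_topology (top_of_set {0..1::real}) T)"
    then obtain t x where p: "p = (t, x)" "t \<in> {0..1}" "x \<in> topspace T" by auto
    have "f x \<in> realization K" "g x \<in> realization K"
      using continuous_map_funspace[OF f] continuous_map_funspace[OF g] p(3) by auto
    then have "(\<lambda>a. (1 - t) * f x a + t * g x a) \<in> realization K"
      using p by (intro comb_in_realization[OF dc un[OF p(3)]]) (simp_all add: realization_iff)
    then show "?h p \<in> realization K" using p by simp
  next
    fix a
    have cf: "continuous_map (prod_topology (top_of_set {0..1::real}) T) euclideanreal (\<lambda>p. f (snd p) a)"
      by (rule continuous_map_compose[OF continuous_map_snd cm_real_coord[OF f], unfolded o_def])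
    have cg: "continuous_map (prod_topology (top_of_set {0..1::real}) T) euclideanreal (\<lambda>p. g (snd p) a)"
      by (rule continuous_map_compose[OF continuous_map_snd cm_real_coord[OF g], unfolded o_def])
    have ct: "continuous_map (prod_topology (top_of_set {0..1::real}) T) euclideanreal (\<lambda>p. fst p)"
      using continuous_map_fst[of "top_of_set {0..1::real}" T] by (simp add: continuous_map_in_subtopology)
    have "continuous_map (prod_topology (top_of_set {0..1::real}) T) euclideanreal
            (\<lambda>p. (1 - fst p) * f (snd p) a + fst p * g (snd p) a)"
      by (intro continuous_intros cf cg ct)
    then show "continuous_map (prod_topology (top_of_set {0..1}) T) euclideanreal (\<lambda>x. ?h x a)"
      by (simp add: case_prod_beta)
  qed
qed simp_all

definition ev :: "'b \<Rightarrow> 'b \<Rightarrow> real" where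
  "ev u = (\<lambda>a. if a = u then 1 else 0)"

lemma rsupp_ev [simp]: "rsupp (ev u) = {u}"
  by (auto simp: rsupp_def ev_def)

lemma prob_ev [simp]: "prob (ev u)"
  unfolding prob_def rsupp_ev by (simp add: ev_def)

lemma ev_in_realization: "{u} \<in> K \<Longrightarrow> ev u \<in> realization K"
  by (simp add: realization_iff)

lemma cone_nullhomotopic:
  assumes dc: "dclosed K" and u: "{u} \<in> K" and ins: "\<And>\<tau>. \<tau> \<in> K \<Longrightarrow> insert u \<tau> \<in> K"
    and f: "continuous_map T (realization_top K) f"
  shows "homotopic_with (\<lambda>_. True) T (realization_top K) f (\<lambda>_. ev u)"
proof (rule straight_homotopic[OF dc f])
  show "continuous_map T (realization_top K) (\<lambda>_. ev u)"
    using ev_in_realization[OF u] by simp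
  fix x assume "x \<in> topspace T"
  then have "rsupp (f x) \<in> K"
    using continuous_map_funspace[OF f] by (auto simp: realization_iff)
  then show "rsupp (f x) \<union> rsupp (ev u) \<in> K" using ins by simp
qed

definition allnull :: "'c topology \<Rightarrow> 'd topology \<Rightarrow> bool" where
  "allnull T Y \<longleftrightarrow> (\<forall>f. continuous_map T Y f \<longrightarrow> (\<exists>c. homotopic_with (\<lambda>_. True) T Y f (\<lambda>_. c)))"

lemma k_connected_alt:
  "k_connected k Y \<longleftrightarrow> (k \<ge> -1 \<longrightarrow> topspace Y \<noteq> {}) \<and> (\<forall>i::nat. int i \<le> k \<longrightarrow> allnull (nsphere i) Y)"
  unfolding k_connected_def allnull_def by blast

lemma cone_k_connected:
  assumes dc: "dclosed K" and u: "{u} \<in> K" and ins: "\<And>\<tau>. \<tau> \<in> K \<Longrightarrow> insert u \<tau> \<in> K"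
  shows "k_connected k (realization_top K)"
  unfolding k_connected_alt allnull_def
  using cone_nullhomotopic[OF dc u ins] ev_in_realization[OF u] by auto

lemma null_via_homeo:
  assumes hm: "homeomorphic_maps T S F G" and f: "continuous_map S Y f"
    and h: "homotopic_with (\<lambda>_. True) T Y (f \<circ> F) (\<lambda>_. c)"
  shows "homotopic_with (\<lambda>_. True) S Y f (\<lambda>_. c)"
proof -
  have G: "continuous_map S T G" using hm by (simp add: homeomorphic_maps_def)
  have "homotopic_with (\<lambda>_. True) S Y ((f \<circ> F) \<circ> G) ((\<lambda>_. c) \<circ> G)"
    by (rule homotopic_with_compose_continuous_map_right[OF h G]) simp
  then show ?thesis
    by (rule homotopic_with_eq) (use hm in \<open>auto simp: homeomorphic_maps_def\<close>)
qed

lemma allnull_homeo: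
  assumes hm: "homeomorphic_maps T S F G" and a: "allnull T Y"
  shows "allnull S Y"
  unfolding allnull_def
proof (intro allI impI)
  fix f assume f: "continuous_map S Y f"
  have F: "continuous_map T S F" using hm by (simp add: homeomorphic_maps_def)
  obtain c where "homotopic_with (\<lambda>_. True) T Y (f \<circ> F) (\<lambda>_. c)"
    using a continuous_map_compose[OF F f] unfolding allnull_def by blast
  then show "\<exists>c. homotopic_with (\<lambda>_. True) S Y f (\<lambda>_. c)"
    using null_via_homeo[OF hm f] by blast
qed

lemma homotopic_realization_mono:
  assumes h: "homotopic_with (\<lambda>_. True) T (realization_top K) f g" and KL: "K \<subseteq> L"
  shows "homotopic_with (\<lambda>_. True) T (realization_top L) f g"
proof -
  have "continuous_map (realization_top K) (realization_top L) id"
    unfolding cm_real using realization_mono[OF KL] realization_coord_cont by auto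
  from homotopic_with_compose_continuous_map_left[OF h this] show ?thesis by simp
qed

abbreviation ptop :: "('b \<Rightarrow> real) set \<Rightarrow> ('b \<Rightarrow> real) topology" where
  "ptop S \<equiv> subtopology (powertop_real UNIV) S"

definition cube :: "(nat \<Rightarrow> real) \<Rightarrow> real \<Rightarrow> nat set \<Rightarrow> (nat \<Rightarrow> real) set" where
  "cube c r J = {x. \<forall>j. if j \<in> J then \<bar>x j - c j\<bar> \<le> r else x j = c j}"

definition cbd :: "(nat \<Rightarrow> real) \<Rightarrow> real \<Rightarrow> nat set \<Rightarrow> (nat \<Rightarrow> real) set" where
  "cbd c r J = {x \<in> cube c r J. \<exists>j\<in>J. \<bar>x j - c j\<bar> = r}"

lemma cbd_sub_cube: "cbd c r J \<subseteq> cube c r J"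
  by (auto simp: cbd_def)

lemma Hausdorff_powertop: "Hausdorff_space (powertop_real (UNIV::'b set))"
  by (simp add: Hausdorff_space_product_topology)

lemma cube_PiE: "cube c r J = PiE UNIV (\<lambda>j. if j \<in> J then {c j - r..c j + r} else {c j})"
  unfolding cube_def by (auto simp: PiE_iff abs_le_iff split: if_splits; force)

lemma compactin_cube: "compactin (powertop_real UNIV) (cube c r J)"
  unfolding cube_PiE compactin_PiE by auto

lemma closedin_coord_eq:
  "closedin (powertop_real UNIV) {x::'b\<Rightarrow>real. \<bar>x j - c\<bar> = r}"
proof -
  have "closedin (powertop_real UNIV) {x \<in> topspace (powertop_real (UNIV::'b set)). \<bar>x j - c\<bar> \<in> {r}}"
    by (rule closedin_continuous_map_preimage[where Y=euclideanreal])
       (auto intro!: continuous_intros continuous_map_product_projection)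
  then show ?thesis by simp
qed

lemma closedin_cbd:
  assumes "finite J" shows "closedin (powertop_real UNIV) (cbd c r J)"
proof -
  have "cbd c r J = cube c r J \<inter> (\<Union>j\<in>J. {x. \<bar>x j - c j\<bar> = r})"
    by (auto simp: cbd_def)
  moreover have "closedin (powertop_real UNIV) (cube c r J)"
    by (rule compactin_imp_closedin[OF Hausdorff_powertop compactin_cube])
  moreover have "closedin (powertop_real UNIV) (\<Union>j\<in>J. {x. \<bar>x j - c j\<bar> = r})"
    using assms by (intro closedin_Union) (auto intro: closedin_coord_eq)
  ultimately show ?thesis by auto
qed

lemma compact_space_cube: "compact_space (ptop (cube c r J))"
  by (rule compact_space_subtopology[OF compactin_cube])

lemma compact_space_cbd: "finite J \<Longrightarrow> compact_space (ptop (cbd c r J))"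
  by (rule compact_space_subtopology, rule closed_compactin[OF compactin_cube cbd_sub_cube closedin_cbd])

lemma topspace_nsphere: "topspace (nsphere d) = {x. (\<Sum>i\<le>d. x i ^ 2) = 1 \<and> (\<forall>i>d. x i = 0)}"
  by (simp add: nsphere)

definition nrm :: "(nat \<Rightarrow> real) \<Rightarrow> (nat \<Rightarrow> nat) \<Rightarrow> nat \<Rightarrow> (nat \<Rightarrow> real) \<Rightarrow> real" where
  "nrm c e d x = sqrt (\<Sum>k\<le>d. (x (e k) - c (e k))^2)"

definition Fmap :: "(nat \<Rightarrow> real) \<Rightarrow> (nat \<Rightarrow> nat) \<Rightarrow> nat \<Rightarrow> (nat \<Rightarrow> real) \<Rightarrow> (nat \<Rightarrow> real)" where
  "Fmap c e d x = (\<lambda>i. if i \<le> d then (x (e i) - c (e i)) / nrm c e d x else 0)"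

lemma nrm_pos:
  assumes e: "bij_betw e {..d} J" and x: "x \<in> cbd c r J" and r: "r > 0"
  shows "nrm c e d x > 0"
proof -
  obtain j where j: "j \<in> J" "\<bar>x j - c j\<bar> = r" using x by (auto simp: cbd_def)
  then obtain k where k: "k \<le> d" "e k = j" using e by (auto simp: bij_betw_def)
  have "0 < (x (e k) - c (e k))^2" using j k r by auto
  also have "\<dots> \<le> (\<Sum>k\<le>d. (x (e k) - c (e k))^2)"
    using k by (intro member_le_sum) auto
  finally show ?thesis unfolding nrm_def by simp
qed

lemma sum_sq_Fmap:
  assumes "nrm c e d x > 0"
  shows "(\<Sum>i\<le>d. (Fmap c e d x i)^2) = 1"
proof -
  let ?S = "\<Sum>k\<le>d. (x (e k) - c (e k))^2"
  have S: "?S > 0" using assms unfolding nrm_def by (metis real_sqrt_gt_0_iff sum_nonneg zero_le_power2 order_le_less)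
  have "(\<Sum>i\<le>d. (Fmap c e d x i)^2) = (\<Sum>i\<le>d. (x (e i) - c (e i))^2 / ?S)"
    unfolding Fmap_def nrm_def using S by (intro sum.cong) (auto simp: power_divide)
  also have "\<dots> = ?S / ?S" by (simp only: sum_divide_distrib)
  finally show ?thesis using S by simp
qed

lemma Fmap_cont:
  assumes e: "bij_betw e {..d} J" and r: "r > 0"
  shows "continuous_map (ptop (cbd c r J)) (nsphere d) (Fmap c e d)"
  unfolding nsphere continuous_map_in_subtopology
proof
  show "continuous_map (ptop (cbd c r J)) (powertop_real UNIV) (Fmap c e d)"
    unfolding continuous_map_componentwise_UNIV
  proof
    fix i
    have pos: "\<And>x. x \<in> cbd c r J \<Longrightarrow> nrm c e d x > 0" using nrm_pos[OF e _ r] by blast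
    have cp: "continuous_map (ptop (cbd c r J)) euclideanreal (\<lambda>x. x j)" for j
      by (intro continuous_map_from_subtopology continuous_map_product_projection) auto
    have "continuous_map (ptop (cbd c r J)) euclideanreal (\<lambda>x. (x (e i) - c (e i)) / nrm c e d x)"
      unfolding nrm_def
      apply (intro continuous_intros cp)
      using pos by (auto simp: nrm_def) (metis order_less_irrefl)
    then show "continuous_map (ptop (cbd c r J)) euclideanreal (\<lambda>x. Fmap c e d x i)"
      unfolding Fmap_def by (cases "i \<le> d") auto
  qed
  show "Fmap c e d \<in> topspace (ptop (cbd c r J)) \<rightarrow> {x. (\<Sum>i\<le>d. x i ^ 2) = 1 \<and> (\<forall>i>d. x i = 0)}"
    using sum_sq_Fmap nrm_pos[OF e _ r] by (auto simp: Fmap_def)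
qed

lemma scale_le_one:
  fixes a b :: "nat \<Rightarrow> real"
  assumes "\<And>k. k \<le> d \<Longrightarrow> a k = t * b k" "t > 0" "\<And>k. k \<le> d \<Longrightarrow> \<bar>a k\<bar> \<le> r"
    "k0 \<le> d" "\<bar>b k0\<bar> = r" "r > 0"
  shows "t \<le> 1"
proof -
  have "t * r = \<bar>a k0\<bar>" using assms by (simp add: abs_mult)
  also have "\<dots> \<le> r" using assms by simp
  finally show ?thesis using assms by simp
qed

lemma Fmap_inj:
  assumes e: "bij_betw e {..d} J" and r: "r > 0"
  shows "inj_on (Fmap c e d) (cbd c r J)"
proof
  fix x x' assume x: "x \<in> cbd c r J" and x': "x' \<in> cbd c r J" and eq: "Fmap c e d x = Fmap c e d x'"
  define N where "N = nrm c e d x"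
  define N' where "N' = nrm c e d x'"
  have N: "N > 0" and N': "N' > 0" using nrm_pos[OF e x r] nrm_pos[OF e x' r] by (auto simp: N_def N'_def)
  have k: "(x (e k) - c (e k)) / N = (x' (e k) - c (e k)) / N'" if "k \<le> d" for k
    using fun_cong[OF eq, of k] that by (simp add: Fmap_def N_def N'_def)
  have a: "x (e k) - c (e k) = (N / N') * (x' (e k) - c (e k))" if "k \<le> d" for k
    using k[OF that] N N' by (simp add: field_simps)
  have b: "x' (e k) - c (e k) = (N' / N) * (x (e k) - c (e k))" if "k \<le> d" for k
    using k[OF that] N N' by (simp add: field_simps)
  have inJ: "e k \<in> J" if "k \<le> d" for k using e that by (auto simp: bij_betw_def)
  have bx: "\<bar>x (e k) - c (e k)\<bar> \<le> r" if "k \<le> d" for k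
    using x inJ[OF that] by (auto simp: cbd_def cube_def)
  have bx': "\<bar>x' (e k) - c (e k)\<bar> \<le> r" if "k \<le> d" for k
    using x' inJ[OF that] by (auto simp: cbd_def cube_def)
  obtain j where j: "j \<in> J" "\<bar>x j - c j\<bar> = r" using x by (auto simp: cbd_def)
  obtain j' where j': "j' \<in> J" "\<bar>x' j' - c j'\<bar> = r" using x' by (auto simp: cbd_def)
  obtain k0 where k0: "k0 \<le> d" "e k0 = j" using e j(1) by (auto simp: bij_betw_def)
  obtain k0' where k0': "k0' \<le> d" "e k0' = j'" using e j'(1) by (auto simp: bij_betw_def)
  have "N / N' \<le> 1"
    by (rule scale_le_one[OF a _ bx k0'(1)]) (use N N' j' k0' r in auto)
  moreover have "N' / N \<le> 1"
    by (rule scale_le_one[OF b _ bx' k0(1)]) (use N N' j k0 r in auto)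
  ultimately have "N = N'" using N N' by (simp add: divide_le_eq_1)
  then have xe: "x (e k) = x' (e k)" if "k \<le> d" for k using a[OF that] N' by simp
  show "x = x'"
  proof
    fix j show "x j = x' j"
    proof (cases "j \<in> J")
      case True
      then obtain k where "k \<le> d" "e k = j" using e by (auto simp: bij_betw_def)
      then show ?thesis using xe by auto
    next
      case False
      then show ?thesis using x x' by (auto simp: cbd_def cube_def)
    qed
  qed
qed

lemma Fmap_surj:
  assumes e: "bij_betw e {..d} J" and r: "r > 0" and y: "y \<in> topspace (nsphere d)"
  shows "y \<in> Fmap c e d ` cbd c r J"
proof -
  have ysum: "(\<Sum>i\<le>d. y i ^ 2) = 1" and yz: "\<And>i. i > d \<Longrightarrow> y i = 0"
    using y by (auto simp: topspace_nsphere)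
  define m where "m = Max ((\<lambda>k. \<bar>y k\<bar>) ` {..d})"
  have mge: "\<bar>y k\<bar> \<le> m" if "k \<le> d" for k unfolding m_def using that by (intro Max_ge) auto
  have "m \<in> (\<lambda>k. \<bar>y k\<bar>) ` {..d}" unfolding m_def by (rule Max_in) auto
  then obtain k0 where k0: "k0 \<le> d" "\<bar>y k0\<bar> = m" by auto
  have "m > 0"
  proof (rule ccontr)
    assume "\<not> m > 0"
    then have "\<And>k. k \<le> d \<Longrightarrow> y k = 0" using mge by (metis abs_ge_zero abs_le_zero_iff order_trans not_less)
    then have "(\<Sum>i\<le>d. y i ^ 2) = 0" by simp
    then show False using ysum by simp
  qed
  define e' where "e' = inv_into {..d} e"
  have e'e: "e' (e k) = k" if "k \<le> d" for k
    using e that unfolding e'_def bij_betw_def by (simp add: inv_into_f_f)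
  have inJ: "e k \<in> J" if "k \<le> d" for k using e that by (auto simp: bij_betw_def)
  define x where "x = (\<lambda>j. if j \<in> J then c j + r * y (e' j) / m else c j)"
  have xe: "x (e k) - c (e k) = r * y k / m" if "k \<le> d" for k
    using that inJ e'e by (simp add: x_def)
  have "x \<in> cube c r J"
    unfolding cube_def
  proof (intro CollectI allI)
    fix j show "if j \<in> J then \<bar>x j - c j\<bar> \<le> r else x j = c j"
    proof (cases "j \<in> J")
      case True
      then obtain k where k: "k \<le> d" "e k = j" using e by (auto simp: bij_betw_def)
      have "\<bar>r * y k / m\<bar> \<le> r" using mge[OF k(1)] r \<open>m > 0\<close>
        by (simp add: abs_mult abs_divide divide_le_eq mult_left_mono)
      then show ?thesis using True xe[OF k(1)] k by simp
    qed (simp add: x_def)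
  qed
  moreover have "\<bar>x (e k0) - c (e k0)\<bar> = r"
    using xe[OF k0(1)] k0 r \<open>m > 0\<close> by (simp add: abs_mult abs_divide)
  ultimately have xc: "x \<in> cbd c r J" unfolding cbd_def using inJ[OF k0(1)] by blast
  have "nrm c e d x = sqrt (\<Sum>k\<le>d. (r / m)^2 * (y k)^2)"
    unfolding nrm_def by (intro arg_cong[where f=sqrt] sum.cong) (auto simp: xe power_mult_distrib power_divide)
  also have "\<dots> = r / m" using ysum r \<open>m > 0\<close> by (simp add: sum_distrib_left[symmetric])
  finally have nx: "nrm c e d x = r / m" .
  have "Fmap c e d x = y"
  proof
    fix i show "Fmap c e d x i = y i"
      using nx xe[of i] yz[of i] r \<open>m > 0\<close> by (auto simp: Fmap_def)
  qed
  then show ?thesis using xc by blast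
qed

lemma Hausdorff_nsphere: "Hausdorff_space (nsphere d)"
  unfolding nsphere by (intro Hausdorff_space_subtopology Hausdorff_powertop)

lemma Fmap_homeo:
  assumes e: "bij_betw e {..d} J" and r: "r > 0"
  shows "homeomorphic_map (ptop (cbd c r J)) (nsphere d) (Fmap c e d)"
proof (rule continuous_imp_homeomorphic_map[OF Fmap_cont[OF e r] compact_space_cbd Hausdorff_nsphere])
  show "finite J" using e bij_betw_finite by blast
  show "Fmap c e d ` topspace (ptop (cbd c r J)) = topspace (nsphere d)"
    using Fmap_surj[OF e r, where c=c] continuous_map_image_subset_topspace[OF Fmap_cont[OF e r, where c=c]]
    by auto
  show "inj_on (Fmap c e d) (topspace (ptop (cbd c r J)))"
    using Fmap_inj[OF e r] by simp
qed

definition qmap :: "(nat \<Rightarrow> real) \<Rightarrow> real \<times> (nat \<Rightarrow> real) \<Rightarrow> (nat \<Rightarrow> real)" where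
  "qmap c p = (\<lambda>j. c j + (1 - fst p) * (snd p j - c j))"

lemma qmap_fiber:
  assumes y: "y \<in> cbd c r J" and y': "y' \<in> cbd c r J" and t: "t \<in> {0..1}" and t': "t' \<in> {0..1}"
    and r: "r > 0" and eq: "qmap c (t, y) = qmap c (t', y')"
  shows "t = t' \<and> (t = 1 \<or> y = y')"
proof -
  have eqj: "(1 - t) * (y j - c j) = (1 - t') * (y' j - c j)" for j
    using fun_cong[OF eq, of j] by (simp add: qmap_def)
  have le: "1 - t \<le> 1 - t'" if y: "y \<in> cbd c r J" and y': "y' \<in> cbd c r J" and t': "t' \<in> {0..1}"
    and eqj: "\<And>j. (1 - t) * (y j - c j) = (1 - t') * (y' j - c j)"
    for t t' y y'
  proof -
    obtain j where j: "j \<in> J" "\<bar>y j - c j\<bar> = r" using y by (auto simp: cbd_def)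
    have b: "\<bar>y' j - c j\<bar> \<le> r" using y' j(1) by (auto simp: cbd_def cube_def)
    have "\<bar>1 - t\<bar> * r = \<bar>(1 - t) * (y j - c j)\<bar>" using j by (simp add: abs_mult)
    also have "\<dots> = \<bar>(1 - t') * (y' j - c j)\<bar>" by (simp only: eqj)
    also have "\<dots> = (1 - t') * \<bar>y' j - c j\<bar>" using t' by (simp add: abs_mult)
    also have "\<dots> \<le> (1 - t') * r" using t' b by (intro mult_left_mono) auto
    finally have "\<bar>1 - t\<bar> * r \<le> (1 - t') * r" .
    then have "\<bar>1 - t\<bar> \<le> 1 - t'" using r by simp
    then show ?thesis by linarith
  qed
  have "1 - t \<le> 1 - t'" by (rule le[OF y y' t' eqj])
  moreover have "1 - t' \<le> 1 - t" by (rule le[OF y' y t]) (use eqj in simp)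
  ultimately have tt: "t = t'" by simp
  moreover have "t = 1 \<or> y = y'"
  proof (cases "t = 1")
    case False
    then have "y j = y' j" for j using eqj[of j] tt by simp
    then show ?thesis by auto
  qed simp
  ultimately show ?thesis by simp
qed

lemma cont_fst01: "continuous_map (prod_topology (top_of_set {0..1::real}) T) euclideanreal fst"
  using continuous_map_fst[of "top_of_set {0..1::real}" T] by (simp add: continuous_map_in_subtopology)

lemma cont_snd_coord: "continuous_map (prod_topology X (ptop S)) euclideanreal (\<lambda>p. snd p j)"
proof -
  have "continuous_map (ptop S) euclideanreal (\<lambda>x. x j)"
    by (intro continuous_map_from_subtopology continuous_map_product_projection) auto
  from continuous_map_compose[OF continuous_map_snd this] show ?thesis by (simp add: o_def)
qed

lemma qmap_in_cube:
  assumes "t \<in> {0..1}" "y \<in> cbd c r J"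
  shows "qmap c (t, y) \<in> cube c r J"
  unfolding cube_def
proof (intro CollectI allI)
  fix j show "if j \<in> J then \<bar>qmap c (t, y) j - c j\<bar> \<le> r else qmap c (t, y) j = c j"
  proof (cases "j \<in> J")
    case True
    have b: "\<bar>y j - c j\<bar> \<le> r" using assms True by (auto simp: cbd_def cube_def)
    have "\<bar>(1 - t) * (y j - c j)\<bar> = (1 - t) * \<bar>y j - c j\<bar>" using assms by (simp add: abs_mult)
    also have "\<dots> \<le> 1 * \<bar>y j - c j\<bar>" using assms by (intro mult_right_mono) auto
    finally show ?thesis using True b by (simp add: qmap_def)
  next
    case False then show ?thesis using assms by (auto simp: qmap_def cbd_def cube_def)
  qed
qed

lemma qmap_cont:
  "continuous_map (prod_topology (top_of_set {0..1}) (ptop (cbd c r J))) (ptop (cube c r J)) (qmap c)"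
  unfolding continuous_map_in_subtopology
proof
  show "continuous_map (prod_topology (top_of_set {0..1}) (ptop (cbd c r J))) (powertop_real UNIV) (qmap c)"
    unfolding continuous_map_componentwise_UNIV qmap_def
    by (intro allI continuous_intros cont_fst01 cont_snd_coord)
  show "qmap c \<in> topspace (prod_topology (top_of_set {0..1}) (ptop (cbd c r J))) \<rightarrow> cube c r J"
    using qmap_in_cube by auto
qed

lemma qmap_surj:
  assumes J: "finite J" "J \<noteq> {}" and r: "r > 0" and x: "x \<in> cube c r J"
  shows "\<exists>t y. t \<in> {0..1} \<and> y \<in> cbd c r J \<and> qmap c (t, y) = x"
proof (cases "x = c")
  case True
  obtain j0 where j0: "j0 \<in> J" using J by auto
  define y where "y = (\<lambda>j. if j = j0 then c j + r else c j)"
  have "y \<in> cbd c r J" using j0 r unfolding cbd_def cube_def y_def by auto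
  moreover have "qmap c (1, y) = x" using True by (simp add: qmap_def)
  moreover have "(1::real) \<in> {0..1}" by simp
  ultimately show ?thesis by blast
next
  case False
  define m where "m = Max ((\<lambda>j. \<bar>x j - c j\<bar>) ` J)"
  have mge: "\<bar>x j - c j\<bar> \<le> m" if "j \<in> J" for j unfolding m_def using that J by (intro Max_ge) auto
  have "m \<in> (\<lambda>j. \<bar>x j - c j\<bar>) ` J" unfolding m_def using J by (intro Max_in) auto
  then obtain j0 where j0: "j0 \<in> J" "\<bar>x j0 - c j0\<bar> = m" by auto
  have offJ: "x j = c j" if "j \<notin> J" for j using x that by (auto simp: cube_def)
  obtain j1 where j1: "x j1 \<noteq> c j1" using False by auto
  then have "j1 \<in> J" using offJ by auto
  then have mpos: "m > 0" using mge[of j1] j1 by auto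
  have mler: "m \<le> r" using x j0 by (auto simp: cube_def)
  define y where "y = (\<lambda>j. c j + (r / m) * (x j - c j))"
  have "y \<in> cube c r J"
    unfolding cube_def
  proof (intro CollectI allI)
    fix j show "if j \<in> J then \<bar>y j - c j\<bar> \<le> r else y j = c j"
    proof (cases "j \<in> J")
      case True
      have "\<bar>y j - c j\<bar> = (r / m) * \<bar>x j - c j\<bar>" using r mpos by (simp add: y_def abs_mult)
      also have "\<dots> \<le> (r / m) * m" using mge[OF True] r mpos by (intro mult_left_mono) auto
      also have "\<dots> = r" using mpos by simp
      finally show ?thesis using True by simp
    qed (simp add: y_def offJ)
  qed
  moreover have "\<bar>y j0 - c j0\<bar> = r" using j0 r mpos by (simp add: y_def abs_mult)
  ultimately have yc: "y \<in> cbd c r J" using j0 unfolding cbd_def by blast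
  have "qmap c (1 - m / r, y) = x"
    unfolding qmap_def y_def using r mpos by (auto simp: field_simps)
  moreover have "1 - m / r \<in> {0..1}" using mpos mler r by (auto simp: field_simps)
  ultimately show ?thesis using yc by blast
qed

lemma cone_ext:
  assumes J: "finite J" "J \<noteq> {}" and r: "r > 0"
    and hom: "homotopic_with (\<lambda>_. True) (ptop (cbd c r J)) Y h (\<lambda>_. a)"
  shows "\<exists>g. continuous_map (ptop (cube c r J)) Y g \<and> (\<forall>x\<in>cbd c r J. g x = h x)"
proof -
  let ?D = "prod_topology (top_of_set {0..1::real}) (ptop (cbd c r J))"
  obtain H where H: "continuous_map ?D Y H" "\<And>x. H (0, x) = h x" "\<And>x. H (1, x) = a"
    using hom unfolding homotopic_with_def by auto
  have cD: "compact_space ?D"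
  proof -
    have "compact_space (top_of_set {0..1::real})"
      using compact_space_subtopology[of euclideanreal "{0..1::real}"] by simp
    then show ?thesis using compact_space_cbd[OF J(1), of c r] by (simp add: compact_space_prod_topology)
  qed
  have hC: "Hausdorff_space (ptop (cube c r J))"
    by (intro Hausdorff_space_subtopology Hausdorff_powertop)
  have cl: "closed_map ?D (ptop (cube c r J)) (qmap c)"
    by (rule continuous_imp_closed_map[OF qmap_cont cD hC])
  have im: "qmap c ` topspace ?D = topspace (ptop (cube c r J))"
  proof
    show "qmap c ` topspace ?D \<subseteq> topspace (ptop (cube c r J))"
      using continuous_map_image_subset_topspace[OF qmap_cont] .
    show "topspace (ptop (cube c r J)) \<subseteq> qmap c ` topspace ?D"
      using qmap_surj[OF J r] by force
  qed
  have qm: "quotient_map ?D (ptop (cube c r J)) (qmap c)"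
    using continuous_closed_quotient_map[OF qmap_cont cl] im by simp
  define g where "g x = H (SOME p. p \<in> topspace ?D \<and> qmap c p = x)" for x
  have gq: "g (qmap c p) = H p" if p: "p \<in> topspace ?D" for p
  proof -
    define p' where "p' = (SOME p'. p' \<in> topspace ?D \<and> qmap c p' = qmap c p)"
    have "p' \<in> topspace ?D \<and> qmap c p' = qmap c p"
      unfolding p'_def by (rule someI[of _ p]) (use p in simp)
    then have p': "p' \<in> topspace ?D" "qmap c p' = qmap c p" by auto
    obtain t y where ty: "p = (t, y)" "t \<in> {0..1}" "y \<in> cbd c r J" using p by auto
    obtain t' y' where ty': "p' = (t', y')" "t' \<in> {0..1}" "y' \<in> cbd c r J" using p' by auto
    have "t' = t \<and> (t' = 1 \<or> y' = y)"
      by (rule qmap_fiber[OF ty'(3) ty(3) ty'(2) ty(2) r]) (use p' ty ty' in simp)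
    then have "H p' = H p" using ty ty' H(3) by auto
    then show ?thesis unfolding g_def p'_def[symmetric] by simp
  qed
  have "continuous_map ?D Y (g \<circ> qmap c)"
    by (rule continuous_map_eq[OF H(1)]) (simp add: gq)
  then have gc: "continuous_map (ptop (cube c r J)) Y g"
    by (rule continuous_compose_quotient_map[OF qm])
  have "g x = h x" if "x \<in> cbd c r J" for x
  proof -
    have "(0, x) \<in> topspace ?D" using that by auto
    moreover have "qmap c (0, x) = x" by (simp add: qmap_def)
    ultimately show ?thesis using gq[of "(0, x)"] H(2) by simp
  qed
  then show ?thesis using gc by blast
qed

lemma cbd_homeomorphic:
  assumes J: "finite J" "card J = Suc d" and r: "r > 0"
  shows "\<exists>F G. homeomorphic_maps (nsphere d) (ptop (cbd c r J)) G F"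
proof -
  obtain e where e: "bij_betw e {0..<card J} J" using ex_bij_betw_nat_finite[OF J(1)] by blast
  have "{0..<card J} = {..d}" using J(2) by auto
  then have e': "bij_betw e {..d} J" using e by simp
  obtain G where "homeomorphic_maps (ptop (cbd c r J)) (nsphere d) (Fmap c e d) G"
    using Fmap_homeo[OF e' r] homeomorphic_map_maps by blast
  then show ?thesis using homeomorphic_maps_sym by blast
qed

lemma cube_extend:
  assumes J: "finite J" and r: "r > 0" and Yne: "topspace Y \<noteq> {}"
    and null: "J \<noteq> {} \<Longrightarrow> allnull (nsphere (card J - 1)) Y"
    and h: "continuous_map (ptop (cbd c r J)) Y h"
  shows "\<exists>g. continuous_map (ptop (cube c r J)) Y g \<and> (\<forall>x\<in>cbd c r J. g x = h x)"
proof (cases "J = {}")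
  case True
  obtain y0 where "y0 \<in> topspace Y" using Yne by blast
  then have "continuous_map (ptop (cube c r J)) Y (\<lambda>_. y0)" by simp
  moreover have "cbd c r J = {}" using True by (simp add: cbd_def)
  ultimately show ?thesis by blast
next
  case False
  define d where "d = card J - 1"
  have cJ: "card J = Suc d" using False J by (simp add: d_def card_gt_0_iff)
  obtain F G where hm: "homeomorphic_maps (nsphere d) (ptop (cbd c r J)) G F"
    using cbd_homeomorphic[OF J cJ r] by blast
  have "allnull (ptop (cbd c r J)) Y"
    using allnull_homeo[OF hm] null[OF False] by (simp add: d_def)
  from this[unfolded allnull_def, rule_format, OF h]
  obtain a where "homotopic_with (\<lambda>_. True) (ptop (cbd c r J)) Y h (\<lambda>_. a)" by blast
  then show ?thesis by (rule cone_ext[OF J False r])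
qed

definition gcell :: "(nat \<Rightarrow> int) \<Rightarrow> nat set \<Rightarrow> (nat \<Rightarrow> real) set" where
  "gcell z J = {x. \<forall>j. if j \<in> J then of_int (z j) \<le> x j \<and> x j \<le> of_int (z j) + 1 else x j = of_int (z j)}"

definition gcen :: "(nat \<Rightarrow> int) \<Rightarrow> nat set \<Rightarrow> (nat \<Rightarrow> real)" where
  "gcen z J = (\<lambda>j. of_int (z j) + (if j \<in> J then 1/2 else 0))"

lemma gcell_cube: "gcell z J = cube (gcen z J) (1/2) J"
  unfolding gcell_def cube_def gcen_def
  by (rule Collect_cong, rule all_cong1) (auto simp: abs_if split: if_splits)

lemma gcen_in: "gcen z J \<in> gcell z J"
  by (auto simp: gcell_def gcen_def)

lemma int_between:
  fixes a b :: int and x :: real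
  assumes "of_int a \<le> x" "x \<le> of_int a + 1" "of_int b < x" "x < of_int b + 1"
  shows "a = b"
proof -
  have "(of_int a :: real) < of_int (b + 1)" using assms by simp
  then have "a < b + 1" by (simp only: of_int_less_iff)
  moreover have "(of_int b :: real) < of_int (a + 1)" using assms by simp
  then have "b < a + 1" by (simp only: of_int_less_iff)
  ultimately show ?thesis by simp
qed

lemma not_int_half: "of_int a \<noteq> (of_int b + 1/2 :: real)"
proof
  assume "of_int a = (of_int b + 1/2 :: real)"
  then have "2 * of_int a = (2 * of_int b + 1 :: real)" by simp
  then have "2 * a = 2 * b + 1" by (metis of_int_eq_iff of_int_add of_int_mult of_int_1 of_int_numeral)
  then show False by presburger
qed

lemma gcell_sub_J:
  assumes "gcell z' J' \<subseteq> gcell z J" shows "J' \<subseteq> J"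
proof
  fix j assume j: "j \<in> J'"
  have "gcen z' J' \<in> gcell z J" using assms gcen_in by blast
  then have "j \<notin> J \<Longrightarrow> gcen z' J' j = of_int (z j)" by (auto simp: gcell_def)
  then show "j \<in> J" using j not_int_half[of "z j" "z' j"] by (force simp: gcen_def)
qed

lemma gcell_sub_eq:
  assumes "gcell z' J' \<subseteq> gcell z J" "J' = J" shows "z' = z"
proof
  fix j
  have c: "gcen z' J' \<in> gcell z J" using assms gcen_in by blast
  show "z' j = z j"
  proof (cases "j \<in> J")
    case True
    then have "of_int (z j) \<le> of_int (z' j) + (1/2::real)" "of_int (z' j) + (1/2::real) \<le> of_int (z j) + 1"
      using c assms(2) by (auto simp: gcell_def gcen_def split: if_splits)
    then show ?thesis by (intro int_between[symmetric, of _ "of_int (z' j) + 1/2"]) auto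
  next
    case False
    then show ?thesis using c assms(2) by (auto simp: gcell_def gcen_def split: if_splits)
  qed
qed

lemma gcell_sub_card:
  assumes "finite J" "gcell z' J' \<subseteq> gcell z J" "(z', J') \<noteq> (z, J)"
  shows "card J' < card J"
proof -
  have "J' \<subseteq> J" by (rule gcell_sub_J[OF assms(2)])
  moreover have "J' \<noteq> J" using gcell_sub_eq[OF assms(2)] assms(3) by auto
  ultimately show ?thesis using assms(1) by (simp add: psubset_card_mono)
qed

definition gbd :: "(nat \<Rightarrow> int) \<Rightarrow> nat set \<Rightarrow> (nat \<Rightarrow> real) set" where
  "gbd z J = cbd (gcen z J) (1/2) J"

lemma gbd_iff: "x \<in> gbd z J \<longleftrightarrow> x \<in> gcell z J \<and> (\<exists>j\<in>J. x j = of_int (z j) \<or> x j = of_int (z j) + 1)"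
proof -
  have e: "(\<bar>x j - gcen z J j\<bar> = 1/2) \<longleftrightarrow> (x j = of_int (z j) \<or> x j = of_int (z j) + 1)"
    if "j \<in> J" for j
  proof -
    have g: "gcen z J j = of_int (z j) + 1/2" using that by (simp add: gcen_def)
    show ?thesis unfolding g by linarith
  qed
  have "(\<exists>j\<in>J. \<bar>x j - gcen z J j\<bar> = 1/2) \<longleftrightarrow> (\<exists>j\<in>J. x j = of_int (z j) \<or> x j = of_int (z j) + 1)"
    by (rule bex_cong[OF refl e])
  then show ?thesis unfolding gbd_def cbd_def gcell_cube[symmetric] mem_Collect_eq by simp
qed

lemma gcell_interior:
  assumes x: "x \<in> gcell z J" "x \<notin> gbd z J" and x1: "x \<in> gcell z1 J1"
  shows "gcell z J \<subseteq> gcell z1 J1"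
proof
  fix y assume y: "y \<in> gcell z J"
  have strict: "of_int (z j) < x j \<and> x j < of_int (z j) + 1" if "j \<in> J" for j
  proof -
    have "\<forall>j. if j \<in> J then of_int (z j) \<le> x j \<and> x j \<le> of_int (z j) + 1 else x j = of_int (z j)"
      using x(1) by (simp add: gcell_def)
    then have a: "of_int (z j) \<le> x j \<and> x j \<le> of_int (z j) + 1" using that by (metis (full_types))
    have b: "\<not> (x j = of_int (z j) \<or> x j = of_int (z j) + 1)" using x that by (auto simp: gbd_iff)
    show ?thesis using a b by linarith
  qed
  show "y \<in> gcell z1 J1"
    unfolding gcell_def
  proof (intro CollectI allI)
    fix j
    show "if j \<in> J1 then of_int (z1 j) \<le> y j \<and> y j \<le> of_int (z1 j) + 1 else y j = of_int (z1 j)"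
    proof (cases "j \<in> J")
      case True
      note s = strict[OF True]
      have "j \<in> J1"
      proof (rule ccontr)
        assume "j \<notin> J1"
        then have "x j = of_int (z1 j)" using x1 by (auto simp: gcell_def)
        then have "(of_int (z j)::real) < of_int (z1 j)" "(of_int (z1 j)::real) < of_int (z j + 1)"
          using s by simp_all
        then have "z j < z1 j" "z1 j < z j + 1" by (simp_all only: of_int_less_iff)
        then show False by simp
      qed
      moreover have "z1 j = z j"
        using x1 \<open>j \<in> J1\<close> s by (intro int_between[of _ "x j"]) (auto simp: gcell_def)
      ultimately show ?thesis using y True by (auto simp: gcell_def)
    next
      case False
      then have yx: "y j = x j" using x(1) y by (auto simp: gcell_def)
      show ?thesis using x1 yx unfolding gcell_def by (auto split: if_splits)
    qed
  qed
qed

lemma gbd_facet: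
  assumes x: "x \<in> gbd z J"
  shows "\<exists>z' J'. x \<in> gcell z' J' \<and> gcell z' J' \<subseteq> gcell z J \<and> (z', J') \<noteq> (z, J)"
proof -
  obtain j where j: "j \<in> J" "x j = of_int (z j) \<or> x j = of_int (z j) + 1" and xc: "x \<in> gcell z J"
    using x by (auto simp: gbd_iff)
  define w where "w = (if x j = of_int (z j) then z j else z j + 1)"
  have xw: "x j = of_int w" using j by (auto simp: w_def)
  define z' where "z' = z(j := w)"
  have xcs: "if i \<in> J then of_int (z i) \<le> x i \<and> x i \<le> of_int (z i) + 1 else x i = of_int (z i)" for i
    using xc unfolding gcell_def by blast
  have "x \<in> gcell z' (J - {j})"
    unfolding gcell_def mem_Collect_eq
  proof
    fix i show "if i \<in> J - {j} then of_int (z' i) \<le> x i \<and> x i \<le> of_int (z' i) + 1 else x i = of_int (z' i)"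
      using xcs[of i] xw by (cases "i = j") (simp_all add: z'_def)
  qed
  moreover have "gcell z' (J - {j}) \<subseteq> gcell z J"
  proof
    fix y assume y: "y \<in> gcell z' (J - {j})"
    have ys: "if i \<in> J - {j} then of_int (z' i) \<le> y i \<and> y i \<le> of_int (z' i) + 1 else y i = of_int (z' i)" for i
      using y unfolding gcell_def by blast
    have wz: "of_int (z j) \<le> (of_int w :: real) \<and> (of_int w :: real) \<le> of_int (z j) + 1"
      by (simp add: w_def)
    show "y \<in> gcell z J"
      unfolding gcell_def mem_Collect_eq
    proof
      fix i show "if i \<in> J then of_int (z i) \<le> y i \<and> y i \<le> of_int (z i) + 1 else y i = of_int (z i)"
        using ys[of i] j(1) wz unfolding z'_def by (cases "i = j") auto
    qed
  qed
  moreover have "(z', J - {j}) \<noteq> (z, J)" using j by auto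
  ultimately show ?thesis by blast
qed

lemma closedin_gcell: "closedin (powertop_real UNIV) (gcell z J)"
  unfolding gcell_cube by (rule compactin_imp_closedin[OF Hausdorff_powertop compactin_cube])

definition gunion :: "((nat \<Rightarrow> int) \<times> nat set) set \<Rightarrow> (nat \<Rightarrow> real) set" where
  "gunion P = (\<Union>p\<in>P. gcell (fst p) (snd p))"

definition gdc :: "((nat \<Rightarrow> int) \<times> nat set) set \<Rightarrow> bool" where
  "gdc P \<longleftrightarrow> (\<forall>p\<in>P. finite (snd p) \<and> (\<forall>z' J'. gcell z' J' \<subseteq> gcell (fst p) (snd p) \<longrightarrow> (z', J') \<in> P))"

lemma closedin_gunion: "finite P \<Longrightarrow> closedin (powertop_real UNIV) (gunion P)"
  unfolding gunion_def by (intro closedin_Union) (auto intro: closedin_gcell)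

lemma paste2:
  assumes A: "closedin (powertop_real UNIV) A" and B: "closedin (powertop_real UNIV) B"
    and f: "continuous_map (ptop A) Y f" and g: "continuous_map (ptop B) Y g"
    and fg: "\<And>x. x \<in> A \<Longrightarrow> x \<in> B \<Longrightarrow> f x = g x"
  shows "continuous_map (ptop (A \<union> B)) Y (\<lambda>x. if x \<in> A then f x else g x)"
proof (rule pasting_lemma_closed[where I="{True, False}" and T="\<lambda>b. if b then A else B"
      and f="\<lambda>b. if b then f else g"])
  fix i :: bool assume "i \<in> {True, False}"
  show "closedin (ptop (A \<union> B)) (if i then A else B)"
    using A B by (auto intro: closedin_subset_topspace)
  have "subtopology (ptop (A \<union> B)) A = ptop A" "subtopology (ptop (A \<union> B)) B = ptop B"
    by (auto simp: subtopology_subtopology Int_absorb1)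
  then show "continuous_map (subtopology (ptop (A \<union> B)) (if i then A else B)) Y (if i then f else g)"
    using f g by auto
qed (use fg in auto)

lemma grid_extend:
  assumes "finite P" "Q \<subseteq> P" "gdc P" "gdc Q" "topspace Y \<noteq> {}"
    "\<And>z J. (z, J) \<in> P \<Longrightarrow> J \<noteq> {} \<Longrightarrow> allnull (nsphere (card J - 1)) Y"
    "continuous_map (ptop (gunion Q)) Y g"
  shows "\<exists>G. continuous_map (ptop (gunion P)) Y G \<and> (\<forall>x\<in>gunion Q. G x = g x)"
  using assms
proof (induction "card (P - Q)" arbitrary: P)
  case 0
  then have "P = Q" by auto
  then show ?case using 0 by blast
next
  case (Suc n)
  have fPQ: "finite (P - Q)" using Suc.prems by simp
  have ne: "P - Q \<noteq> {}" using Suc.hyps(2) by (metis card.empty nat.distinct(1))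
  define M where "M = Max (card ` snd ` (P - Q))"
  have "M \<in> card ` snd ` (P - Q)" unfolding M_def using fPQ ne by (intro Max_in) auto
  then obtain z J where zJ: "(z, J) \<in> P - Q" "card J = M" by auto
  have maxim: "card J1 \<le> card J" if "(z1, J1) \<in> P - Q" for z1 J1
  proof -
    have "card J1 \<in> card ` snd ` (P - Q)" using that by force
    then show ?thesis using fPQ zJ unfolding M_def by (auto intro!: Max_ge)
  qed
  have finJ: "finite J1" if "(z1, J1) \<in> P" for z1 J1 using Suc.prems(3) that unfolding gdc_def by auto
  have nosup: "(z1, J1) = (z, J)" if "(z1, J1) \<in> P" "gcell z J \<subseteq> gcell z1 J1" for z1 J1
  proof (rule ccontr)
    assume neq: "(z1, J1) \<noteq> (z, J)"
    have lt: "card J < card J1" by (rule gcell_sub_card[OF finJ[OF that(1)] that(2)]) (use neq in auto)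
    have "(z1, J1) \<notin> Q"
    proof
      assume "(z1, J1) \<in> Q"
      then have "(z, J) \<in> Q" using Suc.prems(4) that(2) unfolding gdc_def by auto
      then show False using zJ by auto
    qed
    then show False using maxim[of z1 J1] lt that(1) by auto
  qed
  define P' where "P' = P - {(z, J)}"
  have cardP': "n = card (P' - Q)"
  proof -
    have "P' - Q = (P - Q) - {(z, J)}" unfolding P'_def by auto
    then show ?thesis using Suc.hyps(2) zJ(1) fPQ by simp
  qed
  have gdcP': "gdc P'"
    unfolding gdc_def
  proof
    fix p assume p: "p \<in> P'"
    then have pP: "p \<in> P" "p \<noteq> (z, J)" unfolding P'_def by auto
    show "finite (snd p) \<and> (\<forall>z' J'. gcell z' J' \<subseteq> gcell (fst p) (snd p) \<longrightarrow> (z', J') \<in> P')"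
    proof (intro conjI allI impI)
      show "finite (snd p)" using pP finJ[of "fst p" "snd p"] by simp
      fix z' J' assume sub: "gcell z' J' \<subseteq> gcell (fst p) (snd p)"
      then have "(z', J') \<in> P" using Suc.prems(3) pP(1) unfolding gdc_def by blast
      moreover have "(z', J') \<noteq> (z, J)"
      proof
        assume "(z', J') = (z, J)"
        then have "gcell z J \<subseteq> gcell (fst p) (snd p)" using sub by simp
        then have "p = (z, J)" using nosup[of "fst p" "snd p"] pP(1) by simp
        then show False using pP(2) by simp
      qed
      ultimately show "(z', J') \<in> P'" unfolding P'_def by simp
    qed
  qed
  have QP': "Q \<subseteq> P'" using Suc.prems(2) zJ(1) unfolding P'_def by auto
  have fP': "finite P'" using Suc.prems(1) unfolding P'_def by simp
  have h6: "allnull (nsphere (card J - 1)) Y" if "(z, J) \<in> P'" "J \<noteq> {}" for z J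
    using Suc.prems(6)[of z J] that unfolding P'_def by blast
  have "\<exists>G. continuous_map (ptop (gunion P')) Y G \<and> (\<forall>x\<in>gunion Q. G x = g x)"
    by (rule Suc.hyps(1)[OF cardP' fP' QP' gdcP' Suc.prems(4) Suc.prems(5) _ Suc.prems(7)]) (rule h6)
  then obtain G' where G': "continuous_map (ptop (gunion P')) Y G'" "\<forall>x\<in>gunion Q. G' x = g x"
    by blast
  have zJP: "(z, J) \<in> P" using zJ(1) by blast
  have fJ: "finite J" by (rule finJ[OF zJP])
  have bdsub: "gbd z J \<subseteq> gunion P'"
  proof
    fix x assume xb: "x \<in> gbd z J"
    from gbd_facet[OF xb] obtain z' J' where
      x: "x \<in> gcell z' J'" "gcell z' J' \<subseteq> gcell z J" "(z', J') \<noteq> (z, J)"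
      by blast
    have "(z', J') \<in> P" using Suc.prems(3) zJP x(2) unfolding gdc_def by (metis fst_conv snd_conv)
    then have "(z', J') \<in> P'" using x(3) unfolding P'_def by blast
    then show "x \<in> gunion P'" using x(1) unfolding gunion_def by (metis UN_I fst_conv snd_conv)
  qed
  have hcont: "continuous_map (ptop (cbd (gcen z J) (1/2) J)) Y G'"
    using continuous_map_from_subtopology_mono[OF G'(1) bdsub] unfolding gbd_def .
  obtain gC where gC: "continuous_map (ptop (cube (gcen z J) (1/2) J)) Y gC"
      "\<forall>x\<in>cbd (gcen z J) (1/2) J. gC x = G' x"
    using cube_extend[OF fJ _ Suc.prems(5) _ hcont] Suc.prems(6)[OF zJP] by auto
  have agree: "G' x = gC x" if "x \<in> gunion P'" "x \<in> gcell z J" for x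
  proof (cases "x \<in> gbd z J")
    case True then show ?thesis using gC(2) unfolding gbd_def by simp
  next
    case False
    from that(1) obtain z1 J1 where z1: "(z1, J1) \<in> P'" "x \<in> gcell z1 J1"
      unfolding gunion_def by auto
    have "gcell z J \<subseteq> gcell z1 J1" by (rule gcell_interior[OF that(2) False z1(2)])
    then have "(z1, J1) = (z, J)" using nosup z1(1) unfolding P'_def by auto
    then show ?thesis using z1(1) unfolding P'_def by simp
  qed
  have un: "gunion P = gunion P' \<union> gcell z J"
    unfolding gunion_def P'_def using zJP by auto
  have "continuous_map (ptop (gunion P' \<union> gcell z J)) Y (\<lambda>x. if x \<in> gunion P' then G' x else gC x)"
    by (rule paste2[OF closedin_gunion[OF fP'] closedin_gcell G'(1)])
       (use gC(1) agree in \<open>simp_all add: gcell_cube\<close>)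
  moreover have "\<forall>x\<in>gunion Q. (if x \<in> gunion P' then G' x else gC x) = g x"
    using G'(2) QP' unfolding gunion_def by auto
  ultimately show ?case unfolding un by blast
qed

definition rmap :: "'a \<Rightarrow> ('a \<Rightarrow> real) \<Rightarrow> ('a \<Rightarrow> real)" where
  "rmap v f = (\<lambda>a. if a = v then 0 else f a / (1 - f v))"

lemma rmap_supp: "f v < 1 \<Longrightarrow> rsupp (rmap v f) = rsupp f - {v}"
  by (auto simp: rsupp_def rmap_def)

lemma rmap_prob:
  assumes p: "prob f" and fv: "f v < 1"
  shows "prob (rmap v f)"
proof -
  have nn: "\<forall>a. 0 \<le> rmap v f a" using p fv by (auto simp: prob_def rmap_def)
  have fin: "finite (rsupp f)" using p by (simp add: prob_def)
  have s1: "sum f (rsupp f) = 1" using p by (simp add: prob_def)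
  have "sum (rmap v f) (rsupp (rmap v f)) = sum (\<lambda>a. f a / (1 - f v)) (rsupp f - {v})"
    unfolding rmap_supp[of f v, OF fv] by (intro sum.cong) (auto simp: rmap_def)
  also have "\<dots> = sum f (rsupp f - {v}) / (1 - f v)" by (simp add: sum_divide_distrib)
  also have "sum f (rsupp f - {v}) = 1 - f v"
    using fin s1 by (simp add: sum_diff1 rsupp_def)
  finally show ?thesis using nn fin fv unfolding prob_def rmap_supp[of f v, OF fv] by simp
qed

lemma glue_faces:
  assumes v: "v \<notin> \<Union>K" and LK: "L \<subseteq> K" and t: "\<tau> \<in> K \<union> insert v ` L"
  shows "(v \<notin> \<tau> \<longrightarrow> \<tau> \<in> K) \<and> (v \<in> \<tau> \<longrightarrow> \<tau> - {v} \<in> L)"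
proof -
  { assume "\<tau> \<in> K" then have "v \<notin> \<tau>" using v by blast }
  moreover
  { fix \<sigma> assume "\<sigma> \<in> L" "\<tau> = insert v \<sigma>"
    moreover have "v \<notin> \<sigma>" using \<open>\<sigma> \<in> L\<close> LK v by blast
    ultimately have "v \<in> \<tau> \<and> \<tau> - {v} \<in> L" by simp }
  ultimately show ?thesis using t by blast
qed

lemma dclosed_glue:
  assumes dK: "dclosed K" and dL: "dclosed L" and LK: "L \<subseteq> K" and v: "v \<notin> \<Union>K"
  shows "dclosed (K \<union> insert v ` L)"
  unfolding dclosed_def
proof (intro ballI allI impI)
  fix \<tau> \<sigma> assume t: "\<tau> \<in> K \<union> insert v ` L" and s: "\<sigma> \<subseteq> \<tau>"
  show "\<sigma> \<in> K \<union> insert v ` L"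
  proof (cases "\<tau> \<in> K")
    case True then show ?thesis using dK s unfolding dclosed_def by blast
  next
    case False
    then obtain \<rho> where r: "\<rho> \<in> L" "\<tau> = insert v \<rho>" using t by blast
    show ?thesis
    proof (cases "v \<in> \<sigma>")
      case True
      have "\<sigma> - {v} \<in> L" using dL r s unfolding dclosed_def by blast
      moreover have "\<sigma> = insert v (\<sigma> - {v})" using True by blast
      ultimately show ?thesis by blast
    next
      case False
      then have "\<sigma> \<subseteq> \<rho>" using r s by blast
      then have "\<sigma> \<in> L" using dL r unfolding dclosed_def by blast
      then show ?thesis using LK by blast
    qed
  qed
qed

lemma rmap_real:
  assumes v: "v \<notin> \<Union>K" and LK: "L \<subseteq> K" and f: "f \<in> realization (K \<union> insert v ` L)" and fv: "f v < 1"
  shows "rmap v f \<in> realization K" and "0 < f v \<Longrightarrow> rmap v f \<in> realization L"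
proof -
  have pf: "prob f" and sf: "rsupp f \<in> K \<union> insert v ` L" using f by (auto simp: realization_iff)
  note gf = glue_faces[OF v LK sf]
  have pr: "prob (rmap v f)" by (rule rmap_prob[OF pf fv])
  have "rsupp f - {v} \<in> K"
  proof (cases "v \<in> rsupp f")
    case True then show ?thesis using gf LK by blast
  next
    case False then show ?thesis using gf by simp
  qed
  then show "rmap v f \<in> realization K" using pr by (simp add: realization_iff rmap_supp[of f v, OF fv])
  assume "0 < f v"
  then have "v \<in> rsupp f" by (simp add: rsupp_def)
  then have "rsupp f - {v} \<in> L" using gf by blast
  then show "rmap v f \<in> realization L" using pr by (simp add: realization_iff rmap_supp[of f v, OF fv])
qed

lemma rmap_coord_cont:
  assumes psi: "continuous_map T (realization_top X) \<psi>" and lt: "\<And>x. x \<in> topspace T \<Longrightarrow> \<psi> x v < 1"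
  shows "continuous_map T euclideanreal (\<lambda>x. rmap v (\<psi> x) a)"
proof (cases "a = v")
  case True then show ?thesis by (simp add: rmap_def)
next
  case False
  have "continuous_map T euclideanreal (\<lambda>x. \<psi> x a / (1 - \<psi> x v))"
    by (intro continuous_intros cm_real_coord[OF psi]) (use lt in force)
  then show ?thesis using False by (simp add: rmap_def)
qed

lemma unif_cont_coords:
  fixes h :: "(nat \<Rightarrow> real) \<Rightarrow> real"
  assumes h: "continuous_map (ptop S) euclideanreal h" and S: "compactin (powertop_real UNIV) S"
    and e: "\<epsilon> > 0" and z: "\<And>x j. x \<in> S \<Longrightarrow> j > i \<Longrightarrow> x j = 0"
  shows "\<exists>\<delta>>0. \<forall>x\<in>S. \<forall>y\<in>S. (\<forall>j\<le>i. \<bar>x j - y j\<bar> \<le> \<delta>) \<longrightarrow> \<bar>h x - h y\<bar> < \<epsilon>"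
proof -
  have "continuous_on S h"
    using h by (simp add: euclidean_product_topology continuous_map_iff_continuous)
  moreover have "compact S" using S by (simp add: euclidean_product_topology)
  ultimately have "uniformly_continuous_on S h" by (rule compact_uniformly_continuous)
  then obtain d where d: "d > 0" "\<And>x y. x \<in> S \<Longrightarrow> y \<in> S \<Longrightarrow> dist y x < d \<Longrightarrow> dist (h y) (h x) < \<epsilon>"
    unfolding uniformly_continuous_on_def using e by metis
  obtain N where N: "(1/2::real)^N < d/2" using real_arch_pow_inv[of "d/2" "1/2::real"] d by auto
  define \<delta> where "\<delta> = d / 8"
  have "\<delta> > 0" using d by (simp add: \<delta>_def)
  moreover have "\<bar>h x - h y\<bar> < \<epsilon>" if x: "x \<in> S" and y: "y \<in> S" and c: "\<forall>j\<le>i. \<bar>x j - y j\<bar> \<le> \<delta>" for x y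
  proof -
    have cj: "dist (x k) (y k) \<le> \<delta>" for k
    proof (cases "k \<le> i")
      case True then show ?thesis using c by (simp add: dist_real_def)
    next
      case False then show ?thesis using z[OF x, of k] z[OF y, of k] \<open>\<delta> > 0\<close> by simp
    qed
    have "Max {dist (x (from_nat n)) (y (from_nat n)) |n. n \<le> N} \<le> \<delta>"
    proof (rule Max.boundedI)
      have "{dist (x (from_nat n)) (y (from_nat n)) |n. n \<le> N} = (\<lambda>n. dist (x (from_nat n)) (y (from_nat n))) ` {..N}"
        by auto
      then show "finite {dist (x (from_nat n)) (y (from_nat n)) |n. n \<le> N}" by simp
      show "{dist (x (from_nat n)) (y (from_nat n)) |n. n \<le> N} \<noteq> {}" by auto
    qed (use cj in auto)
    then have "dist x y \<le> 2 * \<delta> + (1/2)^N"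
      using dist_fun_le_dist_first_terms[of x y N] by linarith
    also have "\<dots> < d" using N d(1) by (simp add: \<delta>_def)
    finally have "dist x y < d" .
    then have "dist (h x) (h y) < \<epsilon>" using d(2)[OF y x] by (simp add: dist_commute)
    then show ?thesis by (simp add: dist_real_def)
  qed
  ultimately show ?thesis by blast
qed

definition bc :: "nat \<Rightarrow> nat \<Rightarrow> (nat \<Rightarrow> real)" where
  "bc i M = (\<lambda>j. if j \<le> i then real M / 2 else 0)"

definition BM :: "nat \<Rightarrow> nat \<Rightarrow> (nat \<Rightarrow> real) set" where
  "BM i M = cbd (bc i M) (real M / 2) {..i}"

lemma BM_mem:
  "x \<in> BM i M \<longleftrightarrow> (\<forall>j\<le>i. 0 \<le> x j \<and> x j \<le> real M) \<and> (\<forall>j>i. x j = 0) \<and> (\<exists>j\<le>i. x j = 0 \<or> x j = real M)"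
proof -
  have a: "(\<bar>x j - bc i M j\<bar> \<le> real M / 2) \<longleftrightarrow> (0 \<le> x j \<and> x j \<le> real M)" if "j \<le> i" for j
  proof -
    have g: "bc i M j = real M / 2" using that by (simp add: bc_def)
    show ?thesis unfolding g by (rule iffI; linarith)
  qed
  have b: "(\<bar>x j - bc i M j\<bar> = real M / 2) \<longleftrightarrow> (x j = 0 \<or> x j = real M)" if "j \<le> i" for j
  proof -
    have g: "bc i M j = real M / 2" using that by (simp add: bc_def)
    show ?thesis unfolding g by (rule iffI; linarith)
  qed
  have c: "x j = bc i M j \<longleftrightarrow> x j = 0" if "\<not> j \<le> i" for j
    using that unfolding bc_def by simp
  show ?thesis
    unfolding BM_def cbd_def cube_def mem_Collect_eq
    using a b c by (auto simp: not_le)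
qed

lemma BM_zero: "x \<in> BM i M \<Longrightarrow> j > i \<Longrightarrow> x j = 0"
  by (simp add: BM_mem)

lemma compactin_BM: "compactin (powertop_real UNIV) (BM i M)"
  unfolding BM_def by (rule closed_compactin[OF compactin_cube cbd_sub_cube closedin_cbd]) simp

lemma BM_homeo:
  assumes "M \<ge> 1"
  shows "homeomorphic_map (ptop (BM i M)) (nsphere i) (Fmap (bc i M) id i)"
  unfolding BM_def using assms by (intro Fmap_homeo) (auto simp: bij_betw_def)

definition sc :: "nat \<Rightarrow> (nat \<Rightarrow> real) \<Rightarrow> (nat \<Rightarrow> real)" where
  "sc M x = (\<lambda>j. x j / real M)"

lemma sc_BM:
  assumes M: "M \<ge> 1" and x: "x \<in> BM i M"
  shows "sc M x \<in> BM i 1"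
proof -
  have Mp: "real M > 0" using M by simp
  have "\<forall>j\<le>i. 0 \<le> x j \<and> x j \<le> real M" "\<forall>j>i. x j = 0" "\<exists>j\<le>i. x j = 0 \<or> x j = real M"
    using x by (auto simp: BM_mem)
  then show ?thesis using Mp unfolding BM_mem sc_def by (auto simp: divide_le_eq)
qed

lemma sc_Fmap:
  assumes M: "M \<ge> 1" 
  shows "Fmap (bc i M) id i x = Fmap (bc i 1) id i (sc M x)"
proof -
  have Mp: "real M > 0" using M by simp
  have d: "sc M x k - bc i 1 k = (x k - bc i M k) / real M" if "k \<le> i" for k
    using that Mp by (simp add: sc_def bc_def field_simps)
  have "(\<Sum>k\<le>i. (sc M x k - bc i 1 k)^2) = (\<Sum>k\<le>i. (x k - bc i M k)^2 / (real M)^2)"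
    by (rule sum.cong[OF refl]) (simp only: d atMost_iff power_divide)
  then have "nrm (bc i 1) id i (sc M x) = sqrt ((\<Sum>k\<le>i. (x k - bc i M k)^2) / (real M)^2)"
    unfolding nrm_def by (simp add: sum_divide_distrib)
  also have "\<dots> = nrm (bc i M) id i x / real M"
    unfolding nrm_def using Mp by (simp add: real_sqrt_divide)
  finally have n: "nrm (bc i 1) id i (sc M x) = nrm (bc i M) id i x / real M" .
  show ?thesis
    unfolding Fmap_def
  proof (rule ext)
    fix k
    show "(if k \<le> i then (x (id k) - bc i M (id k)) / nrm (bc i M) id i x else 0) =
          (if k \<le> i then (sc M x (id k) - bc i 1 (id k)) / nrm (bc i 1) id i (sc M x) else 0)"
    proof (cases "k \<le> i")
      case True
      have ds: "(a / m) / (N / m) = a / N" if "(m::real) \<noteq> 0" for a m N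
        using that by (cases "N = 0") (simp_all add: field_simps)
      show ?thesis unfolding n id_apply d[OF True] if_P[OF True]
        by (rule ds[symmetric]) (use Mp in simp)
    qed simp
  qed
qed

definition BCs :: "nat \<Rightarrow> nat \<Rightarrow> ((nat \<Rightarrow> int) \<times> nat set) set" where
  "BCs i M = {p. gcell (fst p) (snd p) \<subseteq> BM i M}"

lemma BCs_props:
  assumes p: "(z, J) \<in> BCs i M"
  shows "J \<subseteq> {..i}" "card J \<le> i" "\<And>j. j \<le> i \<Longrightarrow> z j \<in> {0..int M}" "\<And>j. j > i \<Longrightarrow> z j = 0"
proof -
  have c: "gcen z J \<in> BM i M" using p gcen_in unfolding BCs_def by auto
  then have c1: "\<forall>j\<le>i. 0 \<le> gcen z J j \<and> gcen z J j \<le> real M" and c2: "\<forall>j>i. gcen z J j = 0"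
    and c3: "\<exists>j\<le>i. gcen z J j = 0 \<or> gcen z J j = real M"
    by (auto simp: BM_mem)
  have notJ: "j \<notin> J" if "gcen z J j = of_int w" for j w
  proof
    assume "j \<in> J"
    then have "of_int w = (of_int (z j) + 1/2 :: real)" using that by (simp add: gcen_def)
    then show False using not_int_half by blast
  qed
  show JI: "J \<subseteq> {..i}"
  proof
    fix j assume "j \<in> J"
    show "j \<in> {..i}"
    proof (rule ccontr)
      assume "j \<notin> {..i}"
      then have "gcen z J j = of_int 0" using c2 by simp
      then show False using notJ \<open>j \<in> J\<close> by blast
    qed
  qed
  show "z j = 0" if "j > i" for j
  proof -
    have "j \<notin> J" using JI that by auto
    moreover have "gcen z J j = 0" using c2 that by simp
    ultimately have "(of_int (z j) :: real) = 0" by (simp add: gcen_def)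
    then show ?thesis by simp
  qed
  show "z j \<in> {0..int M}" if "j \<le> i" for j
  proof -
    have "0 \<le> gcen z J j" "gcen z J j \<le> real M" using c1 that by auto
    then have "(-1::real) < of_int (z j)" "of_int (z j) \<le> (real M :: real)"
      by (auto simp: gcen_def split: if_splits)
    then have "-1 < z j" "z j \<le> int M" by linarith+
    then show ?thesis by simp
  qed
  obtain j0 where j0: "j0 \<le> i" "gcen z J j0 = 0 \<or> gcen z J j0 = real M" using c3 by blast
  have "j0 \<notin> J"
  proof (cases "gcen z J j0 = 0")
    case True then show ?thesis using notJ[of j0 0] by simp
  next
    case False then have "gcen z J j0 = of_int (int M)" using j0 by simp
    then show ?thesis by (rule notJ)
  qed
  then have "J \<subseteq> {..i} - {j0}" using JI by auto
  then have "card J \<le> card ({..i} - {j0})" by (intro card_mono) auto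
  also have "\<dots> = i" using j0 by simp
  finally show "card J \<le> i" .
qed

lemma finite_BCs: "finite (BCs i M)"
proof -
  have "BCs i M \<subseteq> {z. \<forall>j. (j \<in> {..i} \<longrightarrow> z j \<in> {0..int M}) \<and> (j \<notin> {..i} \<longrightarrow> z j = 0)} \<times> Pow {..i}"
  proof
    fix p assume "p \<in> BCs i M"
    then obtain z J where "p = (z, J)" "(z, J) \<in> BCs i M" by (cases p) auto
    then show "p \<in> {z. \<forall>j. (j \<in> {..i} \<longrightarrow> z j \<in> {0..int M}) \<and> (j \<notin> {..i} \<longrightarrow> z j = 0)} \<times> Pow {..i}"
      using BCs_props[of z J i M] by auto
  qed
  moreover have "finite ({z. \<forall>j. (j \<in> {..i} \<longrightarrow> z j \<in> {0..int M}) \<and> (j \<notin> {..i} \<longrightarrow> z j = 0)} \<times> Pow {..i})"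
    by (intro finite_cartesian_product finite_set_of_finite_funs) auto
  ultimately show ?thesis by (rule finite_subset)
qed

lemma gdc_BCs: "gdc (BCs i M)"
  unfolding gdc_def
proof (intro ballI conjI allI impI)
  fix p assume p: "p \<in> BCs i M"
  obtain z J where "p = (z, J)" by (cases p)
  then show "finite (snd p)" using BCs_props(1)[of z J i M] p by (auto intro: finite_subset)
  fix z' J' assume "gcell z' J' \<subseteq> gcell (fst p) (snd p)"
  then show "(z', J') \<in> BCs i M" using p unfolding BCs_def by auto
qed

lemma gunion_BCs: "gunion (BCs i M) = BM i M"
proof
  show "gunion (BCs i M) \<subseteq> BM i M" unfolding gunion_def BCs_def by auto
  show "BM i M \<subseteq> gunion (BCs i M)"
  proof
    fix x assume x: "x \<in> BM i M"
    have x1: "\<forall>j\<le>i. 0 \<le> x j \<and> x j \<le> real M" and x2: "\<forall>j>i. x j = 0"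
      and x3: "\<exists>j\<le>i. x j = 0 \<or> x j = real M" using x by (auto simp: BM_mem)
    define z where "z = (\<lambda>j. \<lfloor>x j\<rfloor>)"
    define J where "J = {j. j \<le> i \<and> x j \<noteq> of_int \<lfloor>x j\<rfloor>}"
    have xin: "x \<in> gcell z J"
      unfolding gcell_def mem_Collect_eq
    proof
      fix j show "if j \<in> J then of_int (z j) \<le> x j \<and> x j \<le> of_int (z j) + 1 else x j = of_int (z j)"
      proof (cases "j \<in> J")
        case True then show ?thesis by (simp add: z_def)
      next
        case False
        then show ?thesis using x2 by (cases "j \<le> i") (auto simp: z_def J_def)
      qed
    qed
    have "gcell z J \<subseteq> BM i M"
    proof
      fix y assume y: "y \<in> gcell z J"
      have ys: "if j \<in> J then of_int (z j) \<le> y j \<and> y j \<le> of_int (z j) + 1 else y j = of_int (z j)" for j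
        using y unfolding gcell_def by blast
      have "0 \<le> y j \<and> y j \<le> real M" if "j \<le> i" for j
      proof (cases "j \<in> J")
        case True
        have xj: "0 \<le> x j" "x j \<le> real M" "x j \<noteq> of_int \<lfloor>x j\<rfloor>" using x1 that True by (auto simp: J_def)
        have "of_int \<lfloor>x j\<rfloor> < x j" using xj(3) by (metis of_int_floor_le order_le_less)
        then have "\<lfloor>x j\<rfloor> < int M" using xj(2) by linarith
        then have "\<lfloor>x j\<rfloor> + 1 \<le> int M" by simp
        then have f1: "of_int \<lfloor>x j\<rfloor> + 1 \<le> real M" by (metis of_int_1 of_int_add of_int_le_iff of_int_of_nat_eq)
        have f0: "(0::real) \<le> of_int \<lfloor>x j\<rfloor>" using xj(1) by simp
        have yb: "of_int \<lfloor>x j\<rfloor> \<le> y j \<and> y j \<le> of_int \<lfloor>x j\<rfloor> + 1" using ys[of j] True by (simp add: z_def)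
        show ?thesis using f0 f1 yb by linarith
      next
        case False
        then have "y j = x j" using ys[of j] that by (simp add: z_def J_def)
        then show ?thesis using x1 that by simp
      qed
      moreover have "y j = 0" if "j > i" for j
      proof -
        have "j \<notin> J" using that by (simp add: J_def)
        then show ?thesis using ys[of j] x2 that by (simp add: z_def)
      qed
      moreover have "\<exists>j\<le>i. y j = 0 \<or> y j = real M"
      proof -
        obtain j where j: "j \<le> i" "x j = 0 \<or> x j = real M" using x3 by blast
        then have "x j = of_int \<lfloor>x j\<rfloor>" by auto
        then have "j \<notin> J" by (simp add: J_def)
        then have "y j = x j" using ys[of j] \<open>x j = of_int \<lfloor>x j\<rfloor>\<close> by (simp add: z_def)
        then show ?thesis using j by auto
      qed
      ultimately show "y \<in> BM i M" by (simp add: BM_mem)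
    qed
    then have "(z, J) \<in> BCs i M" by (simp add: BCs_def)
    then show "x \<in> gunion (BCs i M)" using xin unfolding gunion_def by force
  qed
qed

lemma gcell_close: "x \<in> gcell z J \<Longrightarrow> y \<in> gcell z J \<Longrightarrow> \<bar>x j - y j\<bar> \<le> 1"
  unfolding gcell_def by (auto split: if_splits dest!: spec[of _ j]; linarith)

lemma prob_le1: assumes "prob f" shows "f a \<le> 1"
proof (cases "a \<in> rsupp f")
  case True
  have "f a \<le> sum f (rsupp f)"
    using assms True by (intro member_le_sum) (auto simp: prob_def)
  then show ?thesis using assms by (simp add: prob_def)
next
  case False then show ?thesis by (simp add: rsupp_def)
qed

lemma real_val: "f \<in> realization K \<Longrightarrow> 0 \<le> f a \<and> f a \<le> 1"
  using prob_le1[of f a] by (auto simp: realization_iff prob_def)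

lemma cm_real_mono:
  assumes "continuous_map T (realization_top L) f" "L \<subseteq> K"
  shows "continuous_map T (realization_top K) f"
  using assms realization_mono[OF assms(2)] unfolding cm_real by blast

lemma glue_sphere:
  fixes K L :: "'a set set" and v :: 'a and i :: nat and m :: int
  assumes dK: "dclosed K" and dL: "dclosed L" and LK: "L \<subseteq> K" and v: "v \<notin> \<Union>K"
    and hK: "k_connected m (realization_top K)" and hL: "k_connected (m - 1) (realization_top L)"
    and im: "int i \<le> m"
    and phi: "continuous_map (nsphere i) (realization_top (K \<union> insert v ` L)) \<phi>"
  shows "\<exists>c. homotopic_with (\<lambda>_. True) (nsphere i) (realization_top (K \<union> insert v ` L)) \<phi> (\<lambda>_. c)"
proof -
  define X where "X = K \<union> insert v ` L"
  have dX: "dclosed X" unfolding X_def by (rule dclosed_glue[OF dK dL LK v])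
  have KX: "K \<subseteq> X" unfolding X_def by blast
  have phiX: "continuous_map (nsphere i) (realization_top X) \<phi>" using phi unfolding X_def .
  define F1 where "F1 = Fmap (bc i 1) id i"
  have F1c: "continuous_map (ptop (BM i 1)) (nsphere i) F1"
    unfolding F1_def using BM_homeo[of 1 i] homeomorphic_imp_continuous_map by auto
  define h1 where "h1 y = \<phi> (F1 y) v" for y
  have h1c: "continuous_map (ptop (BM i 1)) euclideanreal h1"
    unfolding h1_def using continuous_map_compose[OF F1c cm_real_coord[OF phiX, of v]] by (simp add: o_def)
  have "\<exists>\<delta>>0. \<forall>x\<in>BM i 1. \<forall>y\<in>BM i 1. (\<forall>j\<le>i. \<bar>x j - y j\<bar> \<le> \<delta>) \<longrightarrow> \<bar>h1 x - h1 y\<bar> < 1/10"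
    by (rule unif_cont_coords[OF h1c compactin_BM]) (auto intro: BM_zero)
  then obtain \<delta> where \<delta>0: "\<delta> > 0"
    and \<delta>1: "\<forall>x\<in>BM i 1. \<forall>y\<in>BM i 1. (\<forall>j\<le>i. \<bar>x j - y j\<bar> \<le> \<delta>) \<longrightarrow> \<bar>h1 x - h1 y\<bar> < 1/10"
    by blast
  have \<delta>: "\<delta> > 0"
    "\<And>x y. x \<in> BM i 1 \<Longrightarrow> y \<in> BM i 1 \<Longrightarrow> (\<forall>j\<le>i. \<bar>x j - y j\<bar> \<le> \<delta>) \<Longrightarrow> \<bar>h1 x - h1 y\<bar> < 1/10"
    using \<delta>0 \<delta>1 by auto
  obtain M :: nat where M: "1 / \<delta> < real M" using reals_Archimedean2 by blast
  have "0 < 1 / \<delta>" using \<delta>(1) by simp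
  then have "0 < real M" using M by linarith
  then have M1: "M \<ge> 1" by simp
  have Mp: "real M > 0" using M1 by simp
  have Md: "1 / real M \<le> \<delta>" using M \<delta>(1) Mp by (simp add: field_simps)
  define FM where "FM = Fmap (bc i M) id i"
  have homM: "homeomorphic_map (ptop (BM i M)) (nsphere i) FM" unfolding FM_def by (rule BM_homeo[OF M1])
  then obtain G where hmM: "homeomorphic_maps (ptop (BM i M)) (nsphere i) FM G"
    using homeomorphic_map_maps by blast
  have FMc: "continuous_map (ptop (BM i M)) (nsphere i) FM" using homM homeomorphic_imp_continuous_map by blast
  define \<psi> where "\<psi> = \<phi> \<circ> FM"
  have psi: "continuous_map (ptop (BM i M)) (realization_top X) \<psi>"
    unfolding \<psi>_def by (rule continuous_map_compose[OF FMc phiX])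
  define s where "s x = \<psi> x v" for x
  have s_eq: "s x = h1 (sc M x)" if "x \<in> BM i M" for x
    unfolding s_def \<psi>_def h1_def FM_def F1_def using sc_Fmap[OF M1, of i x] by simp
  have s_cont: "continuous_map (ptop (BM i M)) euclideanreal s"
    unfolding s_def by (rule cm_real_coord[OF psi])
  have psi_in: "\<psi> x \<in> realization X" if "x \<in> BM i M" for x
    using continuous_map_funspace[OF psi] that by auto
  have s_rng: "0 \<le> s x \<and> s x \<le> 1" if "x \<in> BM i M" for x
    unfolding s_def using real_val[OF psi_in[OF that]] .
  define BC where "BC = BCs i M"
  have close: "\<bar>s x - s y\<bar> < 1/10" if p: "(z, J) \<in> BC" and x: "x \<in> gcell z J" and y: "y \<in> gcell z J" for z J x y
  proof -
    have xB: "x \<in> BM i M" and yB: "y \<in> BM i M" using p x y by (auto simp: BC_def BCs_def)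
    have "\<forall>j\<le>i. \<bar>sc M x j - sc M y j\<bar> \<le> \<delta>"
    proof (intro allI impI)
      fix j
      have "\<bar>sc M x j - sc M y j\<bar> = \<bar>x j - y j\<bar> / real M" by (simp add: sc_def diff_divide_distrib[symmetric])
      also have "\<dots> \<le> 1 / real M" using gcell_close[OF x y, of j] Mp by (simp add: divide_right_mono)
      finally show "\<bar>sc M x j - sc M y j\<bar> \<le> \<delta>" using Md by linarith
    qed
    then show ?thesis using \<delta>(2)[OF sc_BM[OF M1 xB] sc_BM[OF M1 yB]] s_eq[OF xB] s_eq[OF yB] by simp
  qed
  define P where "P = {p \<in> BC. \<forall>x\<in>gcell (fst p) (snd p). s x > 3/10}"
  define Q where "Q = {p \<in> P. \<forall>x\<in>gcell (fst p) (snd p). s x < 95/100}"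
  have fBC: "finite BC" unfolding BC_def by (rule finite_BCs)
  have PBC: "P \<subseteq> BC" and QP: "Q \<subseteq> P" unfolding P_def Q_def by auto
  have fP: "finite P" using finite_subset[OF PBC fBC] .
  have gBC: "gdc BC" unfolding BC_def by (rule gdc_BCs)
  have gP: "gdc P"
    unfolding gdc_def
  proof (intro ballI conjI allI impI)
    fix p assume p: "p \<in> P"
    then show "finite (snd p)" using gBC PBC unfolding gdc_def by blast
    fix z' J' assume sub: "gcell z' J' \<subseteq> gcell (fst p) (snd p)"
    then have "(z', J') \<in> BC" using gBC PBC p unfolding gdc_def by blast
    then show "(z', J') \<in> P" using p sub unfolding P_def by auto
  qed
  have gQ: "gdc Q"
    unfolding gdc_def
  proof (intro ballI conjI allI impI)
    fix p assume p: "p \<in> Q"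
    then show "finite (snd p)" using gP QP unfolding gdc_def by blast
    fix z' J' assume sub: "gcell z' J' \<subseteq> gcell (fst p) (snd p)"
    then have "(z', J') \<in> P" using gP QP p unfolding gdc_def by blast
    then show "(z', J') \<in> Q" using p sub unfolding Q_def by auto
  qed
  have unBC: "gunion BC = BM i M" unfolding BC_def by (rule gunion_BCs)
  have PB: "gunion P \<subseteq> BM i M" using PBC unBC unfolding gunion_def by auto
  have QB: "gunion Q \<subseteq> BM i M" using QP PB unfolding gunion_def by auto
  have sP: "s x > 3/10" if "x \<in> gunion P" for x using that unfolding gunion_def P_def by auto
  have sQ: "s x < 95/100" if "x \<in> gunion Q" for x using that unfolding gunion_def Q_def by auto
  define R where "R = gunion (BC - P)"
  have sR: "s x < 4/10" if "x \<in> R" for x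
  proof -
    from that obtain z J where zJ: "(z, J) \<in> BC" "(z, J) \<notin> P" "x \<in> gcell z J"
      unfolding R_def gunion_def by auto
    then obtain y where y: "y \<in> gcell z J" "\<not> s y > 3/10" unfolding P_def by auto
    show ?thesis using close[OF zJ(1) zJ(3) y(1)] y(2) by linarith
  qed
  have P85: "x \<in> gunion Q" if "x \<in> gunion P" "s x \<le> 85/100" for x
  proof -
    from that(1) obtain z J where zJ: "(z, J) \<in> P" "x \<in> gcell z J" unfolding gunion_def by auto
    have "\<forall>y\<in>gcell z J. s y < 95/100"
    proof
      fix y assume "y \<in> gcell z J"
      moreover have "(z, J) \<in> BC" using zJ(1) PBC by auto
      ultimately have "\<bar>s x - s y\<bar> < 1/10" using close[of z J x y] zJ(2) by auto
      then show "s y < 95/100" using that(2) by linarith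
    qed
    then have "(z, J) \<in> Q" using zJ(1) unfolding Q_def by auto
    then show ?thesis using zJ(2) unfolding gunion_def by force
  qed
  have RB: "R \<subseteq> BM i M" using unBC unfolding R_def gunion_def by auto
  have "gunion BC = gunion P \<union> R"
    using PBC unfolding R_def gunion_def by blast
  then have unPR: "gunion P \<union> R = BM i M" using unBC by simp
  define ell where "ell x = rmap v (\<psi> x)" for x
  have psiQ: "continuous_map (ptop (gunion Q)) (realization_top X) \<psi>"
    by (rule continuous_map_from_subtopology_mono[OF psi QB])
  have ellQ: "continuous_map (ptop (gunion Q)) (realization_top L) ell"
    unfolding cm_real
  proof (intro conjI ballI allI)
    fix x assume "x \<in> topspace (ptop (gunion Q))"
    then have x: "x \<in> gunion Q" by simp
    have "\<psi> x \<in> realization (K \<union> insert v ` L)" using psi_in QB x unfolding X_def by auto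
    moreover have "x \<in> gunion P" using x QP unfolding gunion_def by blast
    ultimately show "ell x \<in> realization L"
      unfolding ell_def using sQ[OF x] sP[of x] unfolding s_def
      by (intro rmap_real(2)[OF v LK]) auto
  next
    fix a show "continuous_map (ptop (gunion Q)) euclideanreal (\<lambda>x. ell x a)"
    proof -
      have "\<psi> x v < 1" if "x \<in> gunion Q" for x using sQ[OF that] unfolding s_def by linarith
      then show ?thesis unfolding ell_def by (intro rmap_coord_cont[OF psiQ]) auto
    qed
  qed
  have m0: "m \<ge> 0" using im by simp
  have Lne: "topspace (realization_top L) \<noteq> {}" using hL m0 by (simp add: k_connected_def)
  have nullL: "allnull (nsphere (card J - 1)) (realization_top L)" if "(z, J) \<in> P" "J \<noteq> {}" for z J
  proof -
    have zB: "(z, J) \<in> BCs i M" using that(1) PBC unfolding BC_def by auto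
    have ci: "card J \<le> i" by (rule BCs_props(2)[OF zB])
    have "finite J" using gP that(1) unfolding gdc_def by auto
    then have cJ: "card J \<ge> 1" using that(2) by (simp add: Suc_le_eq card_gt_0_iff)
    have "int (card J - 1) = int (card J) - 1" using cJ by (simp add: of_nat_diff)
    moreover have "int (card J) \<le> int i" using ci by simp
    ultimately have le: "int (card J - 1) \<le> m - 1" using im by linarith
    have "\<forall>i. int i \<le> m - 1 \<longrightarrow> allnull (nsphere i) (realization_top L)"
      using hL by (simp add: k_connected_alt)
    then show ?thesis using le by blast
  qed
  have "\<exists>G. continuous_map (ptop (gunion P)) (realization_top L) G \<and> (\<forall>x\<in>gunion Q. G x = ell x)"
    by (rule grid_extend[OF fP QP gP gQ Lne _ ellQ]) (rule nullL)
  then obtain \<Lambda> where \<Lambda>c: "continuous_map (ptop (gunion P)) (realization_top L) \<Lambda>"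
    and \<Lambda>Q: "\<forall>x\<in>gunion Q. \<Lambda> x = ell x" by blast
  define chf where "chf x = (if x \<in> gunion P then \<Lambda> x else ell x)" for x
  have \<Lambda>K: "continuous_map (ptop (gunion P)) (realization_top K) \<Lambda>"
    by (rule cm_real_mono[OF \<Lambda>c LK])
  have psiR: "continuous_map (ptop R) (realization_top X) \<psi>"
    by (rule continuous_map_from_subtopology_mono[OF psi RB])
  have ellR: "continuous_map (ptop R) (realization_top K) ell"
    unfolding cm_real
  proof (intro conjI ballI allI)
    fix x assume "x \<in> topspace (ptop R)"
    then have x: "x \<in> R" by simp
    have "\<psi> x \<in> realization (K \<union> insert v ` L)" using psi_in RB x unfolding X_def by auto
    then show "ell x \<in> realization K"
      unfolding ell_def using sR[OF x] unfolding s_def by (intro rmap_real(1)[OF v LK]) auto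
  next
    fix a show "continuous_map (ptop R) euclideanreal (\<lambda>x. ell x a)"
    proof -
      have "\<psi> x v < 1" if "x \<in> R" for x using sR[OF that] unfolding s_def by linarith
      then show ?thesis unfolding ell_def by (intro rmap_coord_cont[OF psiR]) auto
    qed
  qed
  have chiK: "continuous_map (ptop (BM i M)) (realization_top K) chf"
  proof -
    have "continuous_map (ptop (gunion P \<union> R)) (realization_top K) (\<lambda>x. if x \<in> gunion P then \<Lambda> x else ell x)"
    proof (rule paste2[OF closedin_gunion[OF fP] _ \<Lambda>K ellR])
      show "closedin (powertop_real UNIV) R" unfolding R_def by (rule closedin_gunion) (use fBC in simp)
      fix x assume "x \<in> gunion P" "x \<in> R"
      then have "x \<in> gunion Q" using sR P85 by force
      then show "\<Lambda> x = ell x" using \<Lambda>Q by simp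
    qed
    then show ?thesis unfolding unPR chf_def .
  qed
  have chiX: "continuous_map (ptop (BM i M)) (realization_top X) chf"
    by (rule cm_real_mono[OF chiK KX])
  have chi_cases: "(chf x = ell x \<and> s x < 95/100) \<or> (x \<in> gunion P \<and> s x > 85/100 \<and> chf x \<in> realization L)"
    if x: "x \<in> BM i M" for x
  proof (cases "x \<in> gunion P")
    case False
    then have "x \<in> R" using x unPR by auto
    then have "s x < 95/100" using sR[of x] by linarith
    then show ?thesis using False unfolding chf_def by auto
  next
    case True
    show ?thesis
    proof (cases "s x \<le> 85/100")
      case le: True
      then have "x \<in> gunion Q" using P85 True by blast
      then show ?thesis using \<Lambda>Q sQ True unfolding chf_def by auto
    next
      case False
      have "\<Lambda> x \<in> realization L" using continuous_map_funspace[OF \<Lambda>c] True by auto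
      then show ?thesis using True False unfolding chf_def by auto
    qed
  qed
  define \<beta> where "\<beta> x = min 1 (max 0 (20 * (s x - 8/10)))" for x
  define Mm where "Mm x = (\<lambda>a. (1 - \<beta> x) * \<psi> x a + \<beta> x * ev v a)" for x
  have \<beta>01: "0 \<le> \<beta> x" "\<beta> x \<le> 1" for x unfolding \<beta>_def by auto
  have \<beta>0: "\<beta> x = 0" if "s x \<le> 8/10" for x using that unfolding \<beta>_def by auto
  have \<beta>1: "\<beta> x = 1" if "s x \<ge> 85/100" for x using that unfolding \<beta>_def by auto
  have \<beta>pos: "s x > 8/10" if "\<beta> x \<noteq> 0" for x using that \<beta>0 by force
  have Mm0: "Mm x = \<psi> x" if "\<beta> x = 0" for x using that unfolding Mm_def by auto
  have Mm1: "Mm x = ev v" if "\<beta> x = 1" for x using that unfolding Mm_def by auto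
  have Mm_supp: "rsupp (Mm x) \<subseteq> rsupp (\<psi> x)" and Mm_in: "Mm x \<in> realization X"
    if x: "x \<in> BM i M" for x
  proof -
    have pin: "\<psi> x \<in> realization X" by (rule psi_in[OF x])
    have "rsupp (Mm x) \<subseteq> rsupp (\<psi> x) \<and> Mm x \<in> realization X"
    proof (cases "\<beta> x = 0")
      case True then show ?thesis using Mm0 pin by simp
    next
      case False
      then have "s x > 8/10" by (rule \<beta>pos)
      then have vin: "v \<in> rsupp (\<psi> x)" unfolding s_def rsupp_def by auto
      have pp: "prob (\<psi> x)" "rsupp (\<psi> x) \<in> X" using pin by (auto simp: realization_iff)
      have un: "rsupp (\<psi> x) \<union> rsupp (ev v) = rsupp (\<psi> x)" using vin by auto
      have "rsupp (Mm x) \<subseteq> rsupp (\<psi> x)"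
        using prob_comb(2)[OF pp(1) prob_ev \<beta>01] un unfolding Mm_def by auto
      moreover have "Mm x \<in> realization X"
        unfolding Mm_def by (rule comb_in_realization[OF dX _ pp(1) prob_ev \<beta>01]) (use un pp in simp)
      ultimately show ?thesis by simp
    qed
    then show "rsupp (Mm x) \<subseteq> rsupp (\<psi> x)" "Mm x \<in> realization X" by auto
  qed
  have beta_cont: "continuous_map (ptop (BM i M)) euclideanreal \<beta>"
    unfolding \<beta>_def by (intro continuous_intros s_cont)
  have MmX: "continuous_map (ptop (BM i M)) (realization_top X) Mm"
    unfolding cm_real
  proof (intro conjI ballI allI)
    fix x assume "x \<in> topspace (ptop (BM i M))"
    then show "Mm x \<in> realization X" using Mm_in by simp
  next
    fix a show "continuous_map (ptop (BM i M)) euclideanreal (\<lambda>x. Mm x a)"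
      unfolding Mm_def by (intro continuous_intros beta_cont cm_real_coord[OF psi])
  qed
  have H1: "homotopic_with (\<lambda>_. True) (ptop (BM i M)) (realization_top X) \<psi> Mm"
  proof (rule straight_homotopic[OF dX psi MmX])
    fix x assume "x \<in> topspace (ptop (BM i M))"
    then have x: "x \<in> BM i M" by simp
    have "rsupp (\<psi> x) \<union> rsupp (Mm x) = rsupp (\<psi> x)" using Mm_supp[OF x] by auto
    then show "rsupp (\<psi> x) \<union> rsupp (Mm x) \<in> X" using psi_in[OF x] by (simp add: realization_iff)
  qed
  have H2: "homotopic_with (\<lambda>_. True) (ptop (BM i M)) (realization_top X) Mm chf"
  proof (rule straight_homotopic[OF dX MmX chiX])
    fix x assume "x \<in> topspace (ptop (BM i M))"
    then have x: "x \<in> BM i M" by simp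
    have pin: "rsupp (\<psi> x) \<in> X" using psi_in[OF x] by (simp add: realization_iff)
    show "rsupp (Mm x) \<union> rsupp (chf x) \<in> X"
    proof (cases "chf x = ell x \<and> s x < 95/100")
      case True
      then have "rsupp (chf x) = rsupp (\<psi> x) - {v}"
        unfolding ell_def s_def by (simp add: rmap_supp)
      then have "rsupp (Mm x) \<union> rsupp (chf x) \<subseteq> rsupp (\<psi> x)" using Mm_supp[OF x] by auto
      then show ?thesis using dX pin unfolding dclosed_def by blast
    next
      case False
      then have c: "s x > 85/100" "chf x \<in> realization L" using chi_cases[OF x] by auto
      have "Mm x = ev v" using \<beta>1 c(1) Mm1 by simp
      moreover have "rsupp (chf x) \<in> L" using c(2) by (simp add: realization_iff)
      ultimately show ?thesis unfolding X_def by auto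
    qed
  qed
  have allK: "allnull (nsphere i) (realization_top K)" using hK im by (simp add: k_connected_alt)
  have "allnull (ptop (BM i M)) (realization_top K)"
    by (rule allnull_homeo[OF homeomorphic_maps_sym[THEN iffD1, OF hmM] allK])
  then obtain c where "homotopic_with (\<lambda>_. True) (ptop (BM i M)) (realization_top K) chf (\<lambda>_. c)"
    using chiK unfolding allnull_def by blast
  then have H3: "homotopic_with (\<lambda>_. True) (ptop (BM i M)) (realization_top X) chf (\<lambda>_. c)"
    by (rule homotopic_realization_mono[OF _ KX])
  have "homotopic_with (\<lambda>_. True) (ptop (BM i M)) (realization_top X) (\<phi> \<circ> FM) (\<lambda>_. c)"
    using homotopic_with_trans[OF homotopic_with_trans[OF H1 H2] H3] unfolding \<psi>_def .
  then have "homotopic_with (\<lambda>_. True) (nsphere i) (realization_top X) \<phi> (\<lambda>_. c)"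
    by (rule null_via_homeo[OF hmM phiX])
  then show ?thesis unfolding X_def by blast
qed

lemma glue:
  fixes K L :: "'a set set" and v :: 'a and m :: int
  assumes dK: "dclosed K" and dL: "dclosed L" and LK: "L \<subseteq> K" and v: "v \<notin> \<Union>K"
    and hK: "k_connected m (realization_top K)" and hL: "k_connected (m - 1) (realization_top L)"
  shows "k_connected m (realization_top (K \<union> insert v ` L))"
  unfolding k_connected_alt
proof (intro conjI impI allI)
  assume "m \<ge> -1"
  then have "realization K \<noteq> {}" using hK by (simp add: k_connected_def)
  moreover have "realization K \<subseteq> realization (K \<union> insert v ` L)" by (rule realization_mono) blast
  ultimately show "topspace (realization_top (K \<union> insert v ` L)) \<noteq> {}" by auto
next
  fix i :: nat assume im: "int i \<le> m"
  show "allnull (nsphere i) (realization_top (K \<union> insert v ` L))"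
    unfolding allnull_def using glue_sphere[OF dK dL LK v hK hL im] by blast
qed

lemma dclosed_Ind: "dclosed (Ind_del V E W)"
  unfolding dclosed_def Ind_del_def independent_def by blast

lemma Ind_mono: "W \<subseteq> W' \<Longrightarrow> Ind_del V E W' \<subseteq> Ind_del V E W"
  unfolding Ind_del_def by blast

lemma Ind_split:
  assumes sg: "simple_graph V E" and a: "a \<in> V" "a \<notin> W"
  shows "Ind_del V E W = Ind_del V E (insert a W) \<union> insert a ` Ind_del V E (insert a W \<union> nbhd V E a)"
proof
  have sym: "\<And>x y. E x y \<Longrightarrow> E y x" and irr: "\<And>x. \<not> E x x"
    using sg unfolding simple_graph_def by auto
  show "Ind_del V E W \<subseteq> Ind_del V E (insert a W) \<union> insert a ` Ind_del V E (insert a W \<union> nbhd V E a)"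
  proof
    fix \<tau> assume t: "\<tau> \<in> Ind_del V E W"
    then have ts: "\<tau> \<subseteq> V - W" and ti: "independent E \<tau>" by (auto simp: Ind_del_def)
    show "\<tau> \<in> Ind_del V E (insert a W) \<union> insert a ` Ind_del V E (insert a W \<union> nbhd V E a)"
    proof (cases "a \<in> \<tau>")
      case False
      then have "\<tau> \<in> Ind_del V E (insert a W)" using ts ti by (auto simp: Ind_del_def)
      then show ?thesis by blast
    next
      case True
      have "\<tau> - {a} \<subseteq> V - (insert a W \<union> nbhd V E a)"
      proof
        fix y assume y: "y \<in> \<tau> - {a}"
        have "\<not> E a y" using ti True y unfolding independent_def by blast
        then show "y \<in> V - (insert a W \<union> nbhd V E a)" using ts y by (auto simp: nbhd_def)
      qed
      moreover have "independent E (\<tau> - {a})" using ti unfolding independent_def by blast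
      ultimately have "\<tau> - {a} \<in> Ind_del V E (insert a W \<union> nbhd V E a)" by (simp add: Ind_del_def)
      moreover have "\<tau> = insert a (\<tau> - {a})" using True by blast
      ultimately show ?thesis by blast
    qed
  qed
  show "Ind_del V E (insert a W) \<union> insert a ` Ind_del V E (insert a W \<union> nbhd V E a) \<subseteq> Ind_del V E W"
  proof
    fix \<tau> assume t: "\<tau> \<in> Ind_del V E (insert a W) \<union> insert a ` Ind_del V E (insert a W \<union> nbhd V E a)"
    show "\<tau> \<in> Ind_del V E W"
    proof (cases "\<tau> \<in> Ind_del V E (insert a W)")
      case True then show ?thesis by (auto simp: Ind_del_def)
    next
      case False
      then obtain \<sigma> where s: "\<sigma> \<in> Ind_del V E (insert a W \<union> nbhd V E a)" "\<tau> = insert a \<sigma>" using t by blast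
      have ss: "\<sigma> \<subseteq> V - (insert a W \<union> nbhd V E a)" and si: "independent E \<sigma>"
        using s(1) by (auto simp: Ind_del_def)
      have na: "\<not> E a y" if "y \<in> \<sigma>" for y using ss that by (auto simp: nbhd_def)
      have "\<tau> \<subseteq> V - W" using ss a s(2) by auto
      moreover have "independent E \<tau>"
        unfolding independent_def s(2)
      proof (intro ballI)
        fix x y assume x: "x \<in> insert a \<sigma>" and y: "y \<in> insert a \<sigma>"
        show "\<not> E x y"
        proof (cases "x = a")
          case True
          then show ?thesis using y na irr by auto
        next
          case False
          then have xs: "x \<in> \<sigma>" using x by auto
          show ?thesis
          proof (cases "y = a")
            case True then show ?thesis using na[OF xs] sym by blast
          next
            case False then show ?thesis using xs y si unfolding independent_def by auto
          qed
        qed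
      qed
      ultimately show ?thesis by (simp add: Ind_del_def)
    qed
  qed
qed

lemma glue_Ind:
  assumes sg: "simple_graph V E" and a: "a \<in> V" "a \<notin> W"
    and h1: "k_connected m (realization_top (Ind_del V E (insert a W)))"
    and h2: "k_connected (m - 1) (realization_top (Ind_del V E (insert a W \<union> nbhd V E a)))"
  shows "k_connected m (realization_top (Ind_del V E W))"
proof -
  have "a \<notin> \<Union>(Ind_del V E (insert a W))" by (auto simp: Ind_del_def)
  moreover have "Ind_del V E (insert a W \<union> nbhd V E a) \<subseteq> Ind_del V E (insert a W)" by (rule Ind_mono) blast
  ultimately have "k_connected m (realization_top (Ind_del V E (insert a W) \<union> insert a ` Ind_del V E (insert a W \<union> nbhd V E a)))"
    by (intro glue dclosed_Ind h1 h2)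
  then show ?thesis using Ind_split[OF sg a] by simp
qed

theorem corollary3p10:
  fixes V :: "'a set" and E :: "'a \<Rightarrow> 'a \<Rightarrow> bool" and u v w :: 'a and k :: int
  assumes "simple_graph V E"
    and "u \<in> V" and "v \<in> V" and "w \<in> V"
    and "u \<noteq> v" and "u \<noteq> w" and "v \<noteq> w"
    and "nbhd V E u = {v, w}"
    and "\<not> E v w"
    and "k_connected (k - 1) (realization_top (Ind_del V E (nbhd V E u \<union> nbhd V E v)))"
    and "k_connected (k - 1) (realization_top (Ind_del V E (nbhd V E u \<union> nbhd V E w)))"
    and "k_connected (k - 2)
           (realization_top (Ind_del V E (nbhd V E u \<union> nbhd V E v \<union> nbhd V E w)))"
  shows "k_connected k (realization_top (Ind_del V E {}))"
proof -
  note sg = assms(1)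
  have sym: "\<And>x y. E x y \<Longrightarrow> E y x" and irr: "\<And>x. \<not> E x x"
    using sg unfolding simple_graph_def by auto
  have Nu: "nbhd V E u = {v, w}" by (rule assms(8))
  have uadj: "y \<in> {v, w}" if "y \<in> V" "E u y" for y using Nu that unfolding nbhd_def by blast
  have cone: "k_connected k (realization_top (Ind_del V E (insert w {v})))"
  proof (rule cone_k_connected[OF dclosed_Ind])
    show "{u} \<in> Ind_del V E (insert w {v})"
      using assms(2,5,6) irr by (auto simp: Ind_del_def independent_def)
    fix \<tau> assume t: "\<tau> \<in> Ind_del V E (insert w {v})"
    then have ts: "\<tau> \<subseteq> V - {w, v}" and ti: "independent E \<tau>" by (auto simp: Ind_del_def)
    have nu: "\<not> E u y" if "y \<in> \<tau>" for y using uadj[of y] ts that by blast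
    have "independent E (insert u \<tau>)"
      unfolding independent_def
    proof (intro ballI)
      fix x y assume x: "x \<in> insert u \<tau>" and y: "y \<in> insert u \<tau>"
      show "\<not> E x y"
      proof (cases "x = u")
        case True then show ?thesis using y nu irr by auto
      next
        case False
        then have xs: "x \<in> \<tau>" using x by auto
        show ?thesis
        proof (cases "y = u")
          case True then show ?thesis using nu[OF xs] sym by blast
        next
          case False then show ?thesis using xs y ti unfolding independent_def by auto
        qed
      qed
    qed
    moreover have "insert u \<tau> \<subseteq> V - insert w {v}" using ts assms(2,5,6) by auto
    ultimately show "insert u \<tau> \<in> Ind_del V E (insert w {v})" by (simp add: Ind_del_def)
  qed
  have wv: "w \<notin> {v}" using assms(7) by auto
  have e1: "insert w {v} \<union> nbhd V E w = nbhd V E u \<union> nbhd V E w" using Nu by auto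
  have S1: "k_connected k (realization_top (Ind_del V E {v}))"
    by (rule glue_Ind[OF sg assms(4) wv cone]) (use assms(11) e1 in simp)
  have wN: "w \<notin> insert v (nbhd V E v)" using assms(7,9) by (auto simp: nbhd_def)
  have e2: "insert w (insert v (nbhd V E v)) = nbhd V E u \<union> nbhd V E v" using Nu by auto
  have e3: "insert w (insert v (nbhd V E v)) \<union> nbhd V E w = nbhd V E u \<union> nbhd V E v \<union> nbhd V E w"
    using Nu by auto
  have k2: "k - 1 - 1 = k - 2" by simp
  have S2: "k_connected (k - 1) (realization_top (Ind_del V E (insert v (nbhd V E v))))"
    by (rule glue_Ind[OF sg assms(4) wN]) (use assms(10,12) e2 e3 k2 in simp_all)
  have vE: "v \<notin> {}" by simp
  show ?thesis
    by (rule glue_Ind[OF sg assms(3) vE]) (use S1 S2 in simp_all)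
qed

end
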